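(* Let $G$ be a finitely presented group given by a presentation $P=\langle x_1,\ldots,x_n\mid u_1^{m_1},\ldots,u_r^{m_r}\rangle$ with $n,m_i\ge 1$, where each $u_i$ is an element of the free group $F_n$ on $x_1,\ldots,x_n$ that is not a proper power in $F_n$. Let $\varphi:F_n\to G$ be the canonical map, $R_G$ the finite residual of $G$, and $k_i$ the order of $\varphi(u_i)R_G$ in $G/R_G$. Then there exist finite index normal subgroups $H$ of $G$ such that the order of $\varphi(u_i)H$ in $G/H$ is $k_i$ for all $1\le i\le r$. Moreover, every such $H$ satisfies \[def(H)\ge 1+|G:H|\,(rdef(P)-1),\qquad\text{where } rdef(P)=n-\sum_{i=1}^r\frac1{k_i}.\]
   Context: The finite residual $R_G$ of $G$ is the intersection of all finite index subgroups of $G$. The deficiency of a finite presentation $\langle X\mid R\rangle$ is $|X|-|R|$, and $def(H)$ is the supremum of deficiencies over all finite presentations of $H$. The quantity $rdef(P)$ is the residual deficiency of the presentation $P$ (each $k_i$ is finite since $u_i^{m_i}$ is trivial in $G$). *)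

theory Defs
  imports "HOL-Algebra.Algebra" "HOL-Library.Extended_Real"
begin

text \<open>Words in the generators: a letter (a, True) is the generator x_a,
  (a, False) is its inverse.\<close>

type_synonym fword = "(nat \<times> bool) list"

definition words :: "nat set \<Rightarrow> fword set" where
  "words Gen = {w. set w \<subseteq> Gen \<times> UNIV}"

inductive pres_rel :: "nat set \<Rightarrow> fword set \<Rightarrow> fword \<Rightarrow> fword \<Rightarrow> bool"
  for Gen :: "nat set" and R :: "fword set" where
  cancel: "\<lbrakk> u \<in> words Gen; v \<in> words Gen; a \<in> Gen \<rbrakk> \<Longrightarrow>
            pres_rel Gen R (u @ [(a, b), (a, \<not> b)] @ v) (u @ v)"
| relator: "\<lbrakk> u \<in> words Gen; v \<in> words Gen; r \<in> R \<rbrakk> \<Longrightarrow>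
            pres_rel Gen R (u @ r @ v) (u @ v)"
| refl: "w \<in> words Gen \<Longrightarrow> pres_rel Gen R w w"
| sym: "pres_rel Gen R v w \<Longrightarrow> pres_rel Gen R w v"
| trans: "pres_rel Gen R u v \<Longrightarrow> pres_rel Gen R v w \<Longrightarrow> pres_rel Gen R u w"

definition pres_class :: "nat set \<Rightarrow> fword set \<Rightarrow> fword \<Rightarrow> fword set" where
  "pres_class Gen R w = {v. pres_rel Gen R w v}"

definition pres_group :: "nat set \<Rightarrow> fword set \<Rightarrow> fword set monoid" where
  "pres_group Gen R =
     \<lparr> carrier = pres_class Gen R ` words Gen,
       monoid.mult = (\<lambda>A B. {w. \<exists>a\<in>A. \<exists>b\<in>B. pres_rel Gen R (a @ b) w}),
       monoid.one = pres_class Gen R [] \<rparr>"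

definition free_group :: "nat \<Rightarrow> fword set monoid" where
  "free_group n = pres_group {..<n} {}"

definition proper_power :: "('a, 'b) monoid_scheme \<Rightarrow> 'a \<Rightarrow> bool" where
  "proper_power F u \<longleftrightarrow> (\<exists>v\<in>carrier F. \<exists>k::nat. k \<ge> 2 \<and> u = v [^]\<^bsub>F\<^esub> k)"

text \<open>Deficiency of a group: supremum of |Gen| - |R| over all finite presentations
  (generators may be taken as x_0,...,x_(k-1) without loss of generality).\<close>

definition deficiency :: "('a, 'b) monoid_scheme \<Rightarrow> ereal" where
  "deficiency K = Sup {ereal (real k - real (card R)) | k R.
       finite R \<and> R \<subseteq> words {..<k} \<and> K \<cong> pres_group {..<k} R}"

definition finite_index :: "('a, 'b) monoid_scheme \<Rightarrow> 'a set \<Rightarrow> bool" where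
  "finite_index G H \<longleftrightarrow> finite (rcosets\<^bsub>G\<^esub> H)"

definition group_index :: "('a, 'b) monoid_scheme \<Rightarrow> 'a set \<Rightarrow> nat" where
  "group_index G H = card (rcosets\<^bsub>G\<^esub> H)"

definition finite_residual :: "('a, 'b) monoid_scheme \<Rightarrow> 'a set" where
  "finite_residual G = \<Inter> {H. subgroup H G \<and> finite_index G H}"

text \<open>Order of the image g H of g in the quotient G / H (0 if infinite).\<close>

definition quot_ord :: "('a, 'b) monoid_scheme \<Rightarrow> 'a set \<Rightarrow> 'a \<Rightarrow> nat" where
  "quot_ord G H g = group.ord (G Mod H) (H #>\<^bsub>G\<^esub> g)"

definition pow_relators :: "nat \<Rightarrow> (nat \<Rightarrow> fword) \<Rightarrow> (nat \<Rightarrow> nat) \<Rightarrow> fword set" where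
  "pow_relators r u m = {concat (replicate (m i) (u i)) | i. i < r}"

end

theory Submission
  imports Defs
begin


lemma words_Nil[simp]: "[] \<in> words Gen" by (simp add: words_def)
lemma words_append[simp]: "(u @ v \<in> words Gen) = (u \<in> words Gen \<and> v \<in> words Gen)"
  by (auto simp: words_def)
lemma words_Cons[simp]: "(x # v \<in> words Gen) = (fst x \<in> Gen \<and> v \<in> words Gen)"
  by (cases x) (auto simp: words_def)

definition winv :: "fword \<Rightarrow> fword" where
  "winv w = rev (map (\<lambda>(a,b). (a, \<not> b)) w)"

lemma winv_Nil[simp]: "winv [] = []" by (simp add: winv_def)
lemma winv_Cons[simp]: "winv (x # w) = winv w @ [(fst x, \<not> snd x)]"
  by (cases x) (simp add: winv_def)
lemma winv_append[simp]: "winv (u @ v) = winv v @ winv u"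
  by (simp add: winv_def)
lemma winv_words[simp]: "(winv w \<in> words Gen) = (w \<in> words Gen)"
  by (induction w) auto

lemma winv_winv[simp]: "winv (winv w) = w"
  by (induction w) auto

locale pres =
  fixes Gen :: "nat set" and R :: "fword set"
  assumes R_words: "R \<subseteq> words Gen"
begin

abbreviation rel where "rel \<equiv> pres_rel Gen R"
abbreviation cls where "cls \<equiv> pres_class Gen R"
abbreviation P where "P \<equiv> pres_group Gen R"

lemma rel_words: "rel v w \<Longrightarrow> v \<in> words Gen \<and> w \<in> words Gen"
  by (induction rule: pres_rel.induct) (use R_words in auto)

lemma rel_refl[simp]: "w \<in> words Gen \<Longrightarrow> rel w w" by (rule pres_rel.refl)

lemma rel_app_right: "rel v w \<Longrightarrow> c \<in> words Gen \<Longrightarrow> rel (v @ c) (w @ c)"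
proof (induction rule: pres_rel.induct)
  case (cancel u v a b)
  then show ?case using pres_rel.cancel[of u Gen "v @ c" a R b] by simp
next
  case (relator u v r)
  then show ?case using pres_rel.relator[of u Gen "v @ c" r R] by simp
next
  case (refl w) then show ?case by simp
next
  case (sym v w) then show ?case by (blast intro: pres_rel.sym)
next
  case (trans u v w) then show ?case by (blast intro: pres_rel.trans)
qed

lemma rel_app_left: "rel v w \<Longrightarrow> c \<in> words Gen \<Longrightarrow> rel (c @ v) (c @ w)"
proof (induction rule: pres_rel.induct)
  case (cancel u v a b)
  then show ?case using pres_rel.cancel[of "c @ u" Gen v a R b] by simp
next
  case (relator u v r)
  then show ?case using pres_rel.relator[of "c @ u" Gen v r R] by simp
next
  case (refl w) then show ?case by simp
next
  case (sym v w) then show ?case by (blast intro: pres_rel.sym)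
next
  case (trans u v w) then show ?case by (blast intro: pres_rel.trans)
qed

lemma rel_app: "rel a a' \<Longrightarrow> rel b b' \<Longrightarrow> rel (a @ b) (a' @ b')"
proof -
  assume a: "rel a a'" and b: "rel b b'"
  have "rel (a @ b) (a' @ b)" using rel_app_right[OF a] rel_words[OF b] by simp
  moreover have "rel (a' @ b) (a' @ b')" using rel_app_left[OF b] rel_words[OF a] by simp
  ultimately show ?thesis by (rule pres_rel.trans)
qed

lemma rel_sym: "rel a b \<Longrightarrow> rel b a" by (rule pres_rel.sym)
lemma rel_trans: "rel a b \<Longrightarrow> rel b c \<Longrightarrow> rel a c" by (rule pres_rel.trans)

lemma rel_winv_right: "w \<in> words Gen \<Longrightarrow> rel (w @ winv w) []"
proof (induction w)
  case Nil then show ?case by simp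
next
  case (Cons x w)
  obtain a b where x: "x = (a,b)" by (cases x)
  have wG: "w \<in> words Gen" "a \<in> Gen" using Cons.prems x by auto
  have 1: "rel (w @ winv w @ [(a, \<not> b)]) [(a, \<not> b)]"
    using rel_app_right[OF Cons.IH[OF wG(1)], of "[(a, \<not> b)]"] wG by simp
  have 2: "rel ((a,b) # w @ winv w @ [(a, \<not> b)]) [(a,b), (a, \<not> b)]"
    using rel_app_left[OF 1, of "[(a,b)]"] wG by simp
  have 3: "rel [(a,b), (a, \<not> b)] []"
    using pres_rel.cancel[of "[]" Gen "[]" a R b] wG by simp
  show ?case using rel_trans[OF 2 3] x by simp
qed

lemma rel_winv_left: "w \<in> words Gen \<Longrightarrow> rel (winv w @ w) []"
  using rel_winv_right[of "winv w"] by simp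

lemma rel_winv_cong: "rel a b \<Longrightarrow> rel (winv a) (winv b)"
proof -
  assume ab: "rel a b"
  have aw: "a \<in> words Gen" "b \<in> words Gen" using rel_words[OF ab] by auto
  have 1: "rel (winv a @ []) (winv a @ (b @ winv b))"
    by (rule rel_app[OF rel_refl rel_sym[OF rel_winv_right]]) (use aw in auto)
  have 2: "rel (winv a @ b) []"
    using rel_trans[OF rel_app[OF rel_refl[of "winv a"] rel_sym[OF ab]] rel_winv_left[OF aw(1)]] aw by simp
  have 3: "rel ((winv a @ b) @ winv b) ([] @ winv b)"
    by (rule rel_app[OF 2 rel_refl]) (use aw in simp)
  show ?thesis using rel_trans[OF 1[simplified] 3[simplified]] .
qed

lemma cls_eq_iff: "w \<in> words Gen \<Longrightarrow> cls w = cls v \<longleftrightarrow> rel w v"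
  unfolding pres_class_def
  by (auto intro: rel_trans rel_sym)

lemma cls_mem: "w \<in> words Gen \<Longrightarrow> w \<in> cls w"
  by (simp add: pres_class_def)

lemma carrier_P: "carrier P = cls ` words Gen" by (simp add: pres_group_def)
lemma one_P: "\<one>\<^bsub>P\<^esub> = cls []" by (simp add: pres_group_def)

lemma mult_P: "a \<in> words Gen \<Longrightarrow> b \<in> words Gen \<Longrightarrow> cls a \<otimes>\<^bsub>P\<^esub> cls b = cls (a @ b)"
  unfolding pres_group_def pres_class_def
  by (auto intro: rel_trans rel_sym rel_app)
    (meson rel_refl rel_trans rel_sym rel_app words_append)

lemma carrier_PE: "x \<in> carrier P \<Longrightarrow> (\<And>w. w \<in> words Gen \<Longrightarrow> x = cls w \<Longrightarrow> thesis) \<Longrightarrow> thesis"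
  unfolding carrier_P by blast

lemma cls_carrier[simp]: "w \<in> words Gen \<Longrightarrow> cls w \<in> carrier P"
  by (simp add: carrier_P)

lemma group_P: "group P"
proof (rule groupI)
  show "\<And>x y. x \<in> carrier P \<Longrightarrow> y \<in> carrier P \<Longrightarrow> x \<otimes>\<^bsub>P\<^esub> y \<in> carrier P"
    by (elim carrier_PE) (simp add: mult_P)
  show "\<one>\<^bsub>P\<^esub> \<in> carrier P" by (simp add: one_P)
  show "\<And>x y z. x \<in> carrier P \<Longrightarrow> y \<in> carrier P \<Longrightarrow> z \<in> carrier P \<Longrightarrow>
      x \<otimes>\<^bsub>P\<^esub> y \<otimes>\<^bsub>P\<^esub> z = x \<otimes>\<^bsub>P\<^esub> (y \<otimes>\<^bsub>P\<^esub> z)"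
    by (elim carrier_PE) (simp add: mult_P)
  show "\<And>x. x \<in> carrier P \<Longrightarrow> \<one>\<^bsub>P\<^esub> \<otimes>\<^bsub>P\<^esub> x = x"
    by (elim carrier_PE) (simp add: mult_P one_P)
  show "\<And>x. x \<in> carrier P \<Longrightarrow> \<exists>y\<in>carrier P. y \<otimes>\<^bsub>P\<^esub> x = \<one>\<^bsub>P\<^esub>"
  proof -
    fix x assume "x \<in> carrier P"
    then obtain w where w: "w \<in> words Gen" "x = cls w" by (rule carrier_PE)
    have "cls (winv w) \<otimes>\<^bsub>P\<^esub> x = \<one>\<^bsub>P\<^esub>"
      using w rel_winv_left[OF w(1)] by (simp add: mult_P one_P cls_eq_iff)
    moreover have "cls (winv w) \<in> carrier P" using w by simp
    ultimately show "\<exists>y\<in>carrier P. y \<otimes>\<^bsub>P\<^esub> x = \<one>\<^bsub>P\<^esub>" by blast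
  qed
qed


lemma inv_P: "w \<in> words Gen \<Longrightarrow> inv\<^bsub>P\<^esub> (cls w) = cls (winv w)"
proof -
  assume w: "w \<in> words Gen"
  have "cls (winv w) \<otimes>\<^bsub>P\<^esub> cls w = \<one>\<^bsub>P\<^esub>"
    using w rel_winv_left[OF w] by (simp add: mult_P one_P cls_eq_iff)
  then show ?thesis using group.inv_equality[OF group_P] w by simp
qed

lemma concat_rep_words: "w \<in> words Gen \<Longrightarrow> concat (replicate k w) \<in> words Gen"
  by (induction k) auto

lemma pow_P: "w \<in> words Gen \<Longrightarrow> cls w [^]\<^bsub>P\<^esub> (k::nat) = cls (concat (replicate k w))"
proof (induction k)
  case 0 then show ?case by (simp add: one_P)
next
  case (Suc k)
  have "cls w [^]\<^bsub>P\<^esub> Suc k = cls (concat (replicate k w)) \<otimes>\<^bsub>P\<^esub> cls w"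
    using Suc by simp
  also have "\<dots> = cls (concat (replicate k w) @ w)"
    using Suc.prems concat_rep_words by (simp add: mult_P)
  also have "concat (replicate k w) @ w = concat (replicate (Suc k) w)"
    by (induction k) auto
  finally show ?case .
qed

end


locale RS = pres "{..<n}" "pow_relators r u m" +
  N: normal H "pres_group {..<n} (pow_relators r u m)"
  for n r u m H +
  assumes n_pos: "n \<ge> 1"
    and Hfin: "finite (rcosets\<^bsub>pres_group {..<n} (pow_relators r u m)\<^esub> H)"
    and u_words: "\<forall>i<r. u i \<in> words {..<n}"
    and m_pos: "\<forall>i<r. m i \<ge> 1"
begin

abbreviation Qg where "Qg \<equiv> P Mod H"
abbreviation Q where "Q \<equiv> rcosets\<^bsub>P\<^esub> H"
abbreviation j where "j \<equiv> card Q"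
definition rho where "rho w = H #>\<^bsub>P\<^esub> cls w"
definition act where "act C w = C \<otimes>\<^bsub>Qg\<^esub> rho w"

lemma Qg_group: "group Qg" by (rule N.factorgroup_is_group)
lemma Qg_monoid: "monoid Qg" using Qg_group by (rule group.is_monoid)
lemma carrier_Qg: "carrier Qg = Q" by (simp add: FactGroup_def)
lemma one_Qg: "\<one>\<^bsub>Qg\<^esub> = H" by simp

lemma rho_Q: "w \<in> words {..<n} \<Longrightarrow> rho w \<in> Q"
  unfolding rho_def by (rule N.rcosetsI) (simp_all add: N.subset)

lemma rho_app: "v \<in> words {..<n} \<Longrightarrow> w \<in> words {..<n} \<Longrightarrow>
    rho (v @ w) = rho v \<otimes>\<^bsub>Qg\<^esub> rho w"
  unfolding rho_def by (simp add: N.rcos_sum mult_P)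

lemma rho_Nil: "rho [] = \<one>\<^bsub>Qg\<^esub>"
  unfolding rho_def by (simp add: one_P[symmetric] N.subset)

lemma rho_one_iff: "w \<in> words {..<n} \<Longrightarrow> rho w = \<one>\<^bsub>Qg\<^esub> \<longleftrightarrow> cls w \<in> H"
  unfolding rho_def one_Qg
  by (meson N.coset_join1 N.coset_join2 N.subgroup_axioms cls_carrier)

lemma rho_rel: "rel v w \<Longrightarrow> rho v = rho w"
  unfolding rho_def by (metis cls_eq_iff rel_words)

lemma Q_rho: "C \<in> Q \<Longrightarrow> \<exists>w\<in>words {..<n}. C = rho w"
  unfolding RCOSETS_def rho_def carrier_P by blast

lemma act_Q: "C \<in> Q \<Longrightarrow> w \<in> words {..<n} \<Longrightarrow> act C w \<in> Q"
  unfolding act_def using monoid.m_closed[OF Qg_monoid] rho_Q carrier_Qg by metis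

lemma act_Nil[simp]: "C \<in> Q \<Longrightarrow> act C [] = C"
  unfolding act_def rho_Nil using monoid.r_one[OF Qg_monoid] carrier_Qg by metis

lemma act_app: "C \<in> Q \<Longrightarrow> v \<in> words {..<n} \<Longrightarrow> w \<in> words {..<n} \<Longrightarrow>
   act C (v @ w) = act (act C v) w"
  unfolding act_def using rho_app monoid.m_assoc[OF Qg_monoid] rho_Q carrier_Qg by metis

lemma act_rel: "rel v w \<Longrightarrow> act C v = act C w"
  unfolding act_def using rho_rel by metis

lemma act_H: "C \<in> Q \<Longrightarrow> w \<in> words {..<n} \<Longrightarrow> cls w \<in> H \<Longrightarrow> act C w = C"
  using rho_one_iff act_def act_Nil rho_Nil by metis

lemma act_one: "act H w = rho w" if "w \<in> words {..<n}"
  unfolding act_def using monoid.l_one[OF Qg_monoid] rho_Q[OF that] carrier_Qg one_Qg by metis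

lemma act_inv: "C \<in> Q \<Longrightarrow> w \<in> words {..<n} \<Longrightarrow> act (act C w) (winv w) = C"
  using act_app[of C w "winv w"] act_rel[OF rel_winv_right, of w C] by simp

lemma act_inv2: "C \<in> Q \<Longrightarrow> w \<in> words {..<n} \<Longrightarrow> act (act C (winv w)) w = C"
  using act_app[of C "winv w" w] act_rel[OF rel_winv_left, of w C] by simp


definition idx where "idx = (SOME h. bij_betw h Q {0..<j})"
lemma idx_bij: "bij_betw idx Q {0..<j}"
  unfolding idx_def using ex_bij_betw_finite_nat[OF Hfin] by (rule someI_ex)

definition gi where "gi C a = idx C * n + a"
definition K where "K = j * n"
definition dcos where "dcos g = inv_into Q idx (g div n)"
definition dgen where "dgen g = g mod n"

lemma idx_lt: "C \<in> Q \<Longrightarrow> idx C < j"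
  using idx_bij by (auto simp: bij_betw_def)

lemma gi_lt: "C \<in> Q \<Longrightarrow> a < n \<Longrightarrow> gi C a < K"
proof -
  assume C: "C \<in> Q" and a: "a < n"
  have "idx C + 1 \<le> j" using idx_lt[OF C] by simp
  then have "(idx C + 1) * n \<le> j * n" by (rule mult_right_mono) simp
  then show ?thesis unfolding gi_def K_def using a by simp
qed

lemma dec_gi: "C \<in> Q \<Longrightarrow> a < n \<Longrightarrow> dcos (gi C a) = C \<and> dgen (gi C a) = a"
proof -
  assume C: "C \<in> Q" and a: "a < n"
  have "(idx C * n + a) div n = idx C" using a by simp
  moreover have "(idx C * n + a) mod n = a" using a by simp
  ultimately show ?thesis unfolding dcos_def dgen_def gi_def
    using idx_bij C by (simp add: bij_betw_def inv_into_f_f)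
qed

lemma gi_dec: "g < K \<Longrightarrow> dcos g \<in> Q \<and> dgen g < n \<and> gi (dcos g) (dgen g) = g"
proof -
  assume g: "g < K"
  have "g div n < j" using g n_pos unfolding K_def by (simp add: div_less_iff_less_mult)
  then have d: "g div n \<in> idx ` Q" using idx_bij by (simp add: bij_betw_def)
  then have "dcos g \<in> Q" unfolding dcos_def by (rule inv_into_into)
  moreover have "idx (dcos g) = g div n" unfolding dcos_def using d by (rule f_inv_into_f)
  moreover have "dgen g < n" unfolding dgen_def using n_pos by simp
  ultimately show ?thesis unfolding gi_def dgen_def by simp
qed

primrec lift :: "fword set set \<Rightarrow> fword \<Rightarrow> fword" where
  "lift C [] = []"
| "lift C (x # w) = (if snd x then (gi C (fst x), True) else (gi (act C [x]) (fst x), False))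
      # lift (act C [x]) w"

lemma lift_words: "C \<in> Q \<Longrightarrow> w \<in> words {..<n} \<Longrightarrow> lift C w \<in> words {..<K}"
proof (induction w arbitrary: C)
  case Nil then show ?case by simp
next
  case (Cons x w)
  have x: "[x] \<in> words {..<n}" "fst x < n" using Cons.prems by auto
  have C': "act C [x] \<in> Q" using act_Q[OF Cons.prems(1) x(1)] .
  show ?case using Cons.IH[OF C'] Cons.prems gi_lt[OF Cons.prems(1) x(2)] gi_lt[OF C' x(2)] by auto
qed

lemma lift_app: "C \<in> Q \<Longrightarrow> v \<in> words {..<n} \<Longrightarrow> w \<in> words {..<n} \<Longrightarrow>
    lift C (v @ w) = lift C v @ lift (act C v) w"
proof (induction v arbitrary: C)
  case Nil then show ?case by simp
next
  case (Cons x v)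
  have x: "[x] \<in> words {..<n}" "v \<in> words {..<n}" using Cons.prems by auto
  have C': "act C [x] \<in> Q" using act_Q[OF Cons.prems(1) x(1)] .
  have "act C (x # v) = act (act C [x]) v" using act_app[OF Cons.prems(1) x] by simp
  then show ?case using Cons.IH[OF C' x(2) Cons.prems(3)] by simp
qed

lemma lift_single_inv: "C \<in> Q \<Longrightarrow> fst x < n \<Longrightarrow>
    lift (act C [x]) [(fst x, \<not> snd x)] = winv (lift C [x])"
proof -
  assume C: "C \<in> Q" and x: "fst x < n"
  have xw: "[x] \<in> words {..<n}" using x by simp
  have "act (act C [x]) [(fst x, \<not> snd x)] = C" using act_inv[OF C xw] by simp
  then show ?thesis by (cases x) auto
qed

lemma lift_winv: "C \<in> Q \<Longrightarrow> w \<in> words {..<n} \<Longrightarrow> lift (act C w) (winv w) = winv (lift C w)"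
proof (induction w arbitrary: C)
  case Nil then show ?case by simp
next
  case (Cons x w)
  have x: "[x] \<in> words {..<n}" "w \<in> words {..<n}" "fst x < n" using Cons.prems by auto
  have C': "act C [x] \<in> Q" using act_Q[OF Cons.prems(1) x(1)] .
  have e1: "act C (x # w) = act (act C [x]) w" using act_app[OF Cons.prems(1) x(1,2)] by simp
  have wi: "winv w \<in> words {..<n}" "[(fst x, \<not> snd x)] \<in> words {..<n}" using x by auto
  have e2: "act (act C (x # w)) (winv w) = act C [x]"
    using e1 act_inv[OF C' x(2)] by simp
  have aQ: "act C (x # w) \<in> Q" using act_Q Cons.prems by blast
  have "lift (act C (x # w)) (winv (x # w)) =
      lift (act C (x # w)) (winv w) @ lift (act C [x]) [(fst x, \<not> snd x)]"
    using lift_app[OF aQ wi] e2 by simp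
  also have "\<dots> = winv (lift (act C [x]) w) @ winv (lift C [x])"
    using Cons.IH[OF C' x(2)] e1 lift_single_inv[OF Cons.prems(1) x(3)] by simp
  also have "\<dots> = winv (lift C (x # w))"
    by simp
  finally show ?case .
qed


lemma lift_cancel: "C \<in> Q \<Longrightarrow> a < n \<Longrightarrow>
   \<exists>g b'. g < K \<and> lift C [(a, b), (a, \<not> b)] = [(g, b'), (g, \<not> b')]"
proof -
  assume C: "C \<in> Q" and a: "a < n"
  have w1: "[(a, b)] \<in> words {..<n}" "[(a, \<not> b)] \<in> words {..<n}" using a by auto
  have C1: "act C [(a,b)] \<in> Q" using act_Q[OF C w1(1)] .
  have bk: "act (act C [(a,b)]) [(a, \<not> b)] = C" using act_inv[OF C w1(1)] by simp
  show ?thesis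
  proof (cases b)
    case True
    then show ?thesis using bk gi_lt[OF C a] by auto
  next
    case False
    then show ?thesis using bk gi_lt[OF C1 a] by auto
  qed
qed

lemma lift_rel:
  assumes R'w: "R' \<subseteq> words {..<K}"
    and relQ: "\<forall>D\<in>Q. \<forall>z\<in>pow_relators r u m. pres_rel {..<K} R' (lift D z) []"
    and vw: "rel v w"
  shows "\<forall>C\<in>Q. pres_rel {..<K} R' (lift C v) (lift C w)"
  using vw
proof (induction rule: pres_rel.induct)
  interpret G2: pres "{..<K}" R' by unfold_locales (rule R'w)
  case (cancel x y a b)
  show ?case
  proof
    fix C assume C: "C \<in> Q"
    have a: "a < n" using cancel by simp
    have ab: "[(a, b), (a, \<not> b)] \<in> words {..<n}" using a by auto
    have C1: "act C x \<in> Q" using act_Q[OF C cancel(1)] .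
    have rab: "rel [(a, b), (a, \<not> b)] []"
      using pres_rel.cancel[of "[]" "{..<n}" "[]" a "pow_relators r u m" b] a by simp
    have C2: "act (act C x) [(a, b), (a, \<not> b)] = act C x"
      using act_rel[OF rab] C1 by simp
    obtain g b' where g: "g < K" "lift (act C x) [(a, b), (a, \<not> b)] = [(g, b'), (g, \<not> b')]"
      using lift_cancel[OF C1 a] by blast
    have "lift C (x @ [(a, b), (a, \<not> b)] @ y) = lift C x @ [(g, b'), (g, \<not> b')] @ lift (act C x) y"
      using lift_app[OF C cancel(1), of "[(a, b), (a, \<not> b)] @ y"]
        lift_app[OF C1 ab cancel(2)] C2 g(2) ab cancel by simp
    moreover have "lift C (x @ y) = lift C x @ lift (act C x) y"
      using lift_app[OF C cancel(1,2)] .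
    moreover have "pres_rel {..<K} R' (lift C x @ [(g, b'), (g, \<not> b')] @ lift (act C x) y)
        (lift C x @ lift (act C x) y)"
      by (rule pres_rel.cancel) (use g lift_words[OF C cancel(1)] lift_words[OF C1 cancel(2)] in auto)
    ultimately show "pres_rel {..<K} R' (lift C (x @ [(a, b), (a, \<not> b)] @ y)) (lift C (x @ y))"
      by simp
  qed
next
  interpret G2: pres "{..<K}" R' by unfold_locales (rule R'w)
  case (relator x y z)
  show ?case
  proof
    fix C assume C: "C \<in> Q"
    have zw: "z \<in> words {..<n}" using relator R_words by auto
    have C1: "act C x \<in> Q" using act_Q[OF C relator(1)] .
    have rz: "rel z []"
      using pres_rel.relator[of "[]" "{..<n}" "[]" z "pow_relators r u m"] relator by simp
    have C2: "act (act C x) z = act C x" using act_rel[OF rz] C1 by simp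
    have e: "lift C (x @ z @ y) = lift C x @ lift (act C x) z @ lift (act C x) y"
      using lift_app[OF C relator(1), of "z @ y"] lift_app[OF C1 zw relator(2)] C2 zw relator by simp
    have "pres_rel {..<K} R' (lift C x @ (lift (act C x) z @ lift (act C x) y))
                             (lift C x @ ([] @ lift (act C x) y))"
      using G2.rel_app[OF G2.rel_refl[OF lift_words[OF C relator(1)]]
          G2.rel_app[OF relQ[rule_format, OF C1 relator(3)] G2.rel_refl[OF lift_words[OF C1 relator(2)]]]] .
    then show "pres_rel {..<K} R' (lift C (x @ z @ y)) (lift C (x @ y))"
      using e lift_app[OF C relator(1,2)] by simp
  qed
next
  case (refl w)
  show ?case using lift_words refl by (auto intro: pres_rel.refl)
next
  case (sym v w)
  then show ?case by (blast intro: pres_rel.sym)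
next
  case (trans x v w)
  then show ?case by (blast intro: pres_rel.trans)
qed


definition edge_ok where
  "edge_ok t c a \<longleftrightarrow> t (act c [(a,True)]) = t c @ [(a,True)] \<or> t c = t (act c [(a,True)]) @ [(a,False)]"

lemma H_Q: "H \<in> Q" using N.subgroup_in_rcosets N.is_group by blast

lemma j_pos: "j \<ge> 1" using H_Q Hfin by (metis One_nat_def Suc_leI card_gt_0_iff empty_iff)

lemma closed_all:
  assumes S: "S \<subseteq> Q" "H \<in> S"
    and cl: "\<forall>C\<in>S. \<forall>a<n. \<forall>b. act C [(a,b)] \<in> S"
  shows "S = Q"
proof -
  have "\<forall>w\<in>words {..<n}. act H w \<in> S"
  proof
    fix w assume "w \<in> words {..<n}"
    then show "act H w \<in> S"
    proof (induction w rule: rev_induct)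
      case Nil then show ?case using S H_Q by simp
    next
      case (snoc x w)
      have w: "w \<in> words {..<n}" "[x] \<in> words {..<n}" "fst x < n" using snoc.prems by auto
      have "act H (w @ [x]) = act (act H w) [x]" using act_app[OF H_Q w(1,2)] .
      moreover have "act H w \<in> S" using snoc.IH w by simp
      ultimately show ?case using cl w(3) by (metis prod.collapse)
    qed
  qed
  moreover have "Q \<subseteq> act H ` words {..<n}"
    using Q_rho act_one by blast
  ultimately show ?thesis using S by blast
qed

lemma trans_aux:
  "1 \<le> k \<Longrightarrow> k \<le> j \<Longrightarrow> \<exists>S t E. H \<in> S \<and> S \<subseteq> Q \<and> card S = k \<and> finite E \<and> card E \<le> k - 1
     \<and> t H = [] \<and> (\<forall>C\<in>S. t C \<in> words {..<n} \<and> act H (t C) = C \<and> fst ` set (lift H (t C)) \<subseteq> E)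
     \<and> (\<forall>e\<in>E. \<exists>c\<in>S. \<exists>a<n. e = gi c a \<and> act c [(a,True)] \<in> S \<and> edge_ok t c a)"
proof (induction k rule: nat_induct_at_least)
  case base
  show ?case
    by (rule exI[of _ "{H}"], rule exI[of _ "\<lambda>_. []"], rule exI[of _ "{}"]) (simp add: H_Q)
next
  case (Suc k)
  then obtain S t E where IH: "H \<in> S" "S \<subseteq> Q" "card S = k" "finite E" "card E \<le> k - 1"
     "t H = []" "\<forall>C\<in>S. t C \<in> words {..<n} \<and> act H (t C) = C \<and> fst ` set (lift H (t C)) \<subseteq> E"
     "\<forall>e\<in>E. \<exists>c\<in>S. \<exists>a<n. e = gi c a \<and> act c [(a,True)] \<in> S \<and> edge_ok t c a"
    by auto
  have "S \<noteq> Q" using IH(3) Suc.prems by auto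
  then obtain C a b where Cab: "C \<in> S" "a < n" "act C [(a,b)] \<notin> S"
    using closed_all[OF IH(2,1)] by blast
  define D where "D = act C [(a,b)]"
  have CQ: "C \<in> Q" using Cab IH(2) by auto
  have DQ: "D \<in> Q" unfolding D_def using act_Q[OF CQ] Cab by simp
  have DS: "D \<notin> S" using Cab D_def by simp
  have finS: "finite S" using IH(2) Hfin finite_subset by blast
  define t' where "t' = t(D := t C @ [(a,b)])"
  define e where "e = (if b then gi C a else gi D a)"
  define S' where "S' = insert D S"
  define E' where "E' = insert e E"
  have tS: "\<forall>C'\<in>S. t' C' = t C'" unfolding t'_def using DS by auto
  have liftD: "lift C [(a,b)] = [(e, b)]" unfolding e_def D_def by simp
  have tCw: "t C \<in> words {..<n}" "act H (t C) = C" using IH(7) Cab by auto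
  have ab: "[(a,b)] \<in> words {..<n}" using Cab by simp
  have tD: "t' D = t C @ [(a,b)]" unfolding t'_def by simp
  have P1: "\<forall>C'\<in>S'. t' C' \<in> words {..<n} \<and> act H (t' C') = C' \<and> fst ` set (lift H (t' C')) \<subseteq> E'"
  proof
    fix C' assume "C' \<in> S'"
    then consider "C' \<in> S" | "C' = D" unfolding S'_def by blast
    then show "t' C' \<in> words {..<n} \<and> act H (t' C') = C' \<and> fst ` set (lift H (t' C')) \<subseteq> E'"
    proof cases
      case 1 then show ?thesis using IH(7) tS unfolding E'_def by auto
    next
      case 2
      have "act H (t' D) = D" using tD act_app[OF H_Q tCw(1) ab] tCw(2) D_def by simp
      moreover have "lift H (t' D) = lift H (t C) @ [(e, b)]"
        using tD lift_app[OF H_Q tCw(1) ab] tCw(2) liftD by simp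
      ultimately show ?thesis using 2 tD tCw ab IH(7) Cab(1) unfolding E'_def by auto
    qed
  qed
  have P2: "\<forall>e\<in>E'. \<exists>c\<in>S'. \<exists>a<n. e = gi c a \<and> act c [(a,True)] \<in> S' \<and> edge_ok t' c a"
  proof
    fix e' assume "e' \<in> E'"
    then consider "e' \<in> E" | "e' = e" unfolding E'_def by blast
    then show "\<exists>c\<in>S'. \<exists>a<n. e' = gi c a \<and> act c [(a,True)] \<in> S' \<and> edge_ok t' c a"
    proof cases
      case 1
      then obtain c a' where c: "c \<in> S" "a' < n" "e' = gi c a'" "act c [(a',True)] \<in> S" "edge_ok t c a'"
        using IH(8) by blast
      have "edge_ok t' c a'" using c(5) tS c(1,4) unfolding edge_ok_def by simp
      then show ?thesis using c unfolding S'_def by blast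
    next
      case 2
      show ?thesis
      proof (cases b)
        case True
        have "edge_ok t' C a" unfolding edge_ok_def using tD tS Cab(1) True D_def by simp
        then show ?thesis using 2 True Cab D_def unfolding S'_def e_def by auto
      next
        case False
        have bk: "act D [(a,True)] = C"
          using act_inv[OF CQ ab] False unfolding D_def by simp
        have "edge_ok t' D a" unfolding edge_ok_def using tD tS Cab(1) False bk by simp
        then show ?thesis using 2 False Cab bk unfolding S'_def e_def by auto
      qed
    qed
  qed
  have "card S' = Suc k" unfolding S'_def using DS finS IH(3) by simp
  moreover have "card E' \<le> Suc k - 1"
    unfolding E'_def using IH(4,5) card_insert_le[of E e] Suc.hyps
    by (cases "e \<in> E") (auto simp: card_insert_if)
  moreover have "t' H = []" using tS IH(1,6) by simp
  ultimately show ?case using P1 P2 IH(1,2,4) DQ unfolding S'_def E'_def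
    by (intro exI[of _ S'] exI[of _ t'] exI[of _ E']) (auto simp: S'_def E'_def)
qed

lemma transversal:
  "\<exists>t E. t H = [] \<and> finite E \<and> card E \<le> j - 1
     \<and> (\<forall>C\<in>Q. t C \<in> words {..<n} \<and> act H (t C) = C \<and> fst ` set (lift H (t C)) \<subseteq> E)
     \<and> (\<forall>e\<in>E. \<exists>c\<in>Q. \<exists>a<n. e = gi c a \<and> edge_ok t c a)"
proof -
  obtain S t E where IH: "H \<in> S" "S \<subseteq> Q" "card S = j" "finite E" "card E \<le> j - 1"
     "t H = []" "\<forall>C\<in>S. t C \<in> words {..<n} \<and> act H (t C) = C \<and> fst ` set (lift H (t C)) \<subseteq> E"
     "\<forall>e\<in>E. \<exists>c\<in>S. \<exists>a<n. e = gi c a \<and> act c [(a,True)] \<in> S \<and> edge_ok t c a"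
    using trans_aux[OF j_pos order_refl] by blast
  have SQ: "S = Q" using IH(2,3) Hfin by (simp add: card_subset_eq)
  have "\<forall>e\<in>E. \<exists>c\<in>Q. \<exists>a<n. e = gi c a \<and> edge_ok t c a" using IH(8) SQ by blast
  then show ?thesis using IH(4-7) SQ by (intro exI[of _ t] exI[of _ E]) simp
qed

end


context RS begin

definition pw :: "fword \<Rightarrow> nat \<Rightarrow> fword" where "pw w s = concat (replicate s w)"

lemma pw_words: "w \<in> words {..<n} \<Longrightarrow> pw w s \<in> words {..<n}"
  unfolding pw_def by (rule concat_rep_words)

lemma pw_add: "pw w (s + t) = pw w s @ pw w t"
  unfolding pw_def by (simp add: replicate_add)

lemma pw_comm: "pw w s @ pw w t = pw w t @ pw w s"
  by (metis pw_add add.commute)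

lemma pw_0[simp]: "pw w 0 = []" by (simp add: pw_def)

lemma rho_pw: "w \<in> words {..<n} \<Longrightarrow> rho (pw w s) = rho w [^]\<^bsub>Qg\<^esub> s"
proof (induction s)
  case 0 then show ?case by (simp add: rho_Nil)
next
  case (Suc s)
  have "pw w (Suc s) = pw w s @ w" using pw_add[of w s 1] by (simp add: pw_def)
  then show ?case using Suc rho_app[OF pw_words[OF Suc.prems] Suc.prems] by simp
qed

definition gam where "gam i = rho (u i)"
definition kk where "kk i = group.ord Qg (gam i)"

lemma gam_Q: "i < r \<Longrightarrow> gam i \<in> Q" unfolding gam_def using rho_Q u_words by simp

lemma u_rel: "i < r \<Longrightarrow> rel (pw (u i) (m i)) []"
proof -
  assume i: "i < r"
  have "pw (u i) (m i) \<in> pow_relators r u m" unfolding pow_relators_def pw_def using i by blast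
  then show ?thesis using pres_rel.relator[of "[]" "{..<n}" "[]" "pw (u i) (m i)" "pow_relators r u m"] by simp
qed

lemma gam_pow_m: "i < r \<Longrightarrow> gam i [^]\<^bsub>Qg\<^esub> m i = \<one>\<^bsub>Qg\<^esub>"
  using rho_pw[of "u i" "m i"] u_words rho_rel[OF u_rel] rho_Nil unfolding gam_def by simp

lemma kk_pos: "i < r \<Longrightarrow> kk i > 0"
proof -
  assume i: "i < r"
  have "kk i dvd m i" unfolding kk_def
    using group.pow_eq_id[OF Qg_group, of "gam i" "m i"] gam_pow_m[OF i] gam_Q[OF i] carrier_Qg by simp
  then show ?thesis using m_pos i by (metis dvd_0_left_iff gr0I not_one_le_zero)
qed

lemma act_pw: "C \<in> Q \<Longrightarrow> i < r \<Longrightarrow> act C (pw (u i) s) = C \<otimes>\<^bsub>Qg\<^esub> gam i [^]\<^bsub>Qg\<^esub> s"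
  unfolding act_def gam_def using rho_pw u_words by simp

definition orb where "orb i C = {act C (pw (u i) s) | s. True}"

lemma orb_Q: "C \<in> Q \<Longrightarrow> i < r \<Longrightarrow> orb i C \<subseteq> Q"
  unfolding orb_def using act_Q pw_words u_words by blast

lemma orb_self: "C \<in> Q \<Longrightarrow> C \<in> orb i C"
  unfolding orb_def by (rule CollectI, rule exI[of _ 0]) simp

lemma orb_sub: assumes "C \<in> Q" "i < r" "D \<in> orb i C" shows "orb i D \<subseteq> orb i C"
proof
  fix E assume "E \<in> orb i D"
  then obtain s' where E: "E = act D (pw (u i) s')" unfolding orb_def by blast
  obtain s where D: "D = act C (pw (u i) s)" using assms(3) unfolding orb_def by blast
  have "E = act C (pw (u i) (s + s'))"
    using E D act_app[OF assms(1) pw_words pw_words] u_words assms(2) pw_add by simp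
  then show "E \<in> orb i C" unfolding orb_def by blast
qed

lemma orb_sym: assumes C: "C \<in> Q" and i: "i < r" and D: "D \<in> orb i C" shows "C \<in> orb i D"
proof -
  obtain s where s: "D = act C (pw (u i) s)" using D unfolding orb_def by blast
  have mi: "m i \<ge> 1" using m_pos i by simp
  have "1 * s \<le> m i * s" using mi by (rule mult_le_mono1)
  then have ss: "s + (m i * s - s) = m i * s" by simp
  have g: "gam i \<in> carrier Qg" using gam_Q[OF i] carrier_Qg by simp
  have "act D (pw (u i) (m i * s - s)) = act C (pw (u i) (m i * s))"
    using s act_app[OF C pw_words pw_words] u_words i pw_add ss by metis
  also have "\<dots> = C \<otimes>\<^bsub>Qg\<^esub> (gam i [^]\<^bsub>Qg\<^esub> m i) [^]\<^bsub>Qg\<^esub> s"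
    using act_pw[OF C i] monoid.nat_pow_pow[OF Qg_monoid g] by simp
  also have "\<dots> = C"
    using gam_pow_m[OF i] monoid.nat_pow_one[OF Qg_monoid] monoid.r_one[OF Qg_monoid] C carrier_Qg by simp
  finally show ?thesis unfolding orb_def by (metis (mono_tags, lifting) mem_Collect_eq)
qed

lemma orb_eq: "C \<in> Q \<Longrightarrow> i < r \<Longrightarrow> D \<in> orb i C \<Longrightarrow> orb i D = orb i C"
  by (meson orb_sub orb_sym orb_Q subset_antisym subsetD)

definition rep where "rep i C = (SOME D. D \<in> orb i C)"

lemma rep_orb: "C \<in> Q \<Longrightarrow> rep i C \<in> orb i C"
  unfolding rep_def using orb_self by (metis someI_ex)

lemma rep_Q: "C \<in> Q \<Longrightarrow> i < r \<Longrightarrow> rep i C \<in> Q"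
  using rep_orb orb_Q by blast

lemma in_orb_rep: "C \<in> Q \<Longrightarrow> i < r \<Longrightarrow> \<exists>s. C = act (rep i C) (pw (u i) s)"
  using orb_sym[OF _ _ rep_orb] unfolding orb_def by blast

lemma orb_img: assumes C: "C \<in> Q" and i: "i < r"
  shows "orb i C = (\<lambda>s. C \<otimes>\<^bsub>Qg\<^esub> gam i [^]\<^bsub>Qg\<^esub> s) ` {..<kk i}"
proof
  show "orb i C \<subseteq> (\<lambda>s. C \<otimes>\<^bsub>Qg\<^esub> gam i [^]\<^bsub>Qg\<^esub> s) ` {..<kk i}"
  proof
    fix D assume "D \<in> orb i C"
    then obtain s where "D = act C (pw (u i) s)" unfolding orb_def by blast
    then have s: "D = C \<otimes>\<^bsub>Qg\<^esub> gam i [^]\<^bsub>Qg\<^esub> s" using act_pw[OF C i] by simp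
    have g: "gam i \<in> carrier Qg" using gam_Q[OF i] carrier_Qg by simp
    have "gam i [^]\<^bsub>Qg\<^esub> s = gam i [^]\<^bsub>Qg\<^esub> (s mod kk i)"
    proof -
      have e0: "kk i * (s div kk i) + s mod kk i = s" by (rule mult_div_mod_eq)
      have p1: "gam i [^]\<^bsub>Qg\<^esub> kk i = \<one>\<^bsub>Qg\<^esub>"
        using group.pow_ord_eq_1[OF Qg_group g] unfolding kk_def .
      have "gam i [^]\<^bsub>Qg\<^esub> s = gam i [^]\<^bsub>Qg\<^esub> (kk i * (s div kk i)) \<otimes>\<^bsub>Qg\<^esub> gam i [^]\<^bsub>Qg\<^esub> (s mod kk i)"
        using monoid.nat_pow_mult[OF Qg_monoid g, of "kk i * (s div kk i)" "s mod kk i"] e0 by simp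
      also have "gam i [^]\<^bsub>Qg\<^esub> (kk i * (s div kk i)) = (gam i [^]\<^bsub>Qg\<^esub> kk i) [^]\<^bsub>Qg\<^esub> (s div kk i)"
        using monoid.nat_pow_pow[OF Qg_monoid g] by simp
      also have "\<dots> = \<one>\<^bsub>Qg\<^esub>" using p1 monoid.nat_pow_one[OF Qg_monoid] by simp
      also have "\<one>\<^bsub>Qg\<^esub> \<otimes>\<^bsub>Qg\<^esub> gam i [^]\<^bsub>Qg\<^esub> (s mod kk i) = gam i [^]\<^bsub>Qg\<^esub> (s mod kk i)"
        using monoid.l_one[OF Qg_monoid] monoid.nat_pow_closed[OF Qg_monoid g] by simp
      finally show ?thesis .
    qed
    note eq = this
    have lt: "s mod kk i \<in> {..<kk i}" using kk_pos[OF i] by simp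
    show "D \<in> (\<lambda>s. C \<otimes>\<^bsub>Qg\<^esub> gam i [^]\<^bsub>Qg\<^esub> s) ` {..<kk i}"
      unfolding s eq using lt by (rule imageI)
  qed
next
  show "(\<lambda>s. C \<otimes>\<^bsub>Qg\<^esub> gam i [^]\<^bsub>Qg\<^esub> s) ` {..<kk i} \<subseteq> orb i C"
    unfolding orb_def using act_pw[OF C i] by blast
qed

lemma orb_card: assumes C: "C \<in> Q" and i: "i < r" shows "card (orb i C) = kk i"
proof -
  have g: "gam i \<in> carrier Qg" using gam_Q[OF i] carrier_Qg by simp
  have Cc: "C \<in> carrier Qg" using C carrier_Qg by simp
  have "inj_on (\<lambda>s. gam i [^]\<^bsub>Qg\<^esub> s) {0 .. kk i - 1}"
    using group.ord_inj[OF Qg_group g] unfolding kk_def by simp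
  moreover have "{0 .. kk i - 1} = {..<kk i}" using kk_pos[OF i] by auto
  ultimately have inj1: "inj_on (\<lambda>s. gam i [^]\<^bsub>Qg\<^esub> s) {..<kk i}" by simp
  have "inj_on (\<lambda>s. C \<otimes>\<^bsub>Qg\<^esub> gam i [^]\<^bsub>Qg\<^esub> s) {..<kk i}"
  proof (rule inj_onI)
    fix x y assume "x \<in> {..<kk i}" "y \<in> {..<kk i}"
      "C \<otimes>\<^bsub>Qg\<^esub> gam i [^]\<^bsub>Qg\<^esub> x = C \<otimes>\<^bsub>Qg\<^esub> gam i [^]\<^bsub>Qg\<^esub> y"
    then have "gam i [^]\<^bsub>Qg\<^esub> x = gam i [^]\<^bsub>Qg\<^esub> y"
      using monoid.Units_l_cancel[OF Qg_monoid, of C] group.Units_eq[OF Qg_group] Cc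
        monoid.nat_pow_closed[OF Qg_monoid g] by simp
    then show "x = y" using inj1 \<open>x \<in> {..<kk i}\<close> \<open>y \<in> {..<kk i}\<close> by (meson inj_on_def)
  qed
  then show ?thesis using orb_img[OF C i] card_image by fastforce
qed

lemma card_orbits: assumes i: "i < r" shows "kk i * card (orb i ` Q) = j"
proof -
  have UQ: "\<Union> (orb i ` Q) = Q"
  proof
    show "\<Union> (orb i ` Q) \<subseteq> Q" using orb_Q[OF _ i] by (simp add: UN_least)
    show "Q \<subseteq> \<Union> (orb i ` Q)" using orb_self by blast
  qed
  have "kk i * card (orb i ` Q) = card (\<Union> (orb i ` Q))"
  proof (rule card_partition)
    show "finite (orb i ` Q)" using Hfin by simp
    show "finite (\<Union> (orb i ` Q))" using UQ Hfin by simp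
    show "\<And>c. c \<in> orb i ` Q \<Longrightarrow> card c = kk i" using orb_card[OF _ i] by blast
    show "\<And>c1 c2. c1 \<in> orb i ` Q \<Longrightarrow> c2 \<in> orb i ` Q \<Longrightarrow> c1 \<noteq> c2 \<Longrightarrow> c1 \<inter> c2 = {}"
    proof -
      fix c1 c2 assume "c1 \<in> orb i ` Q" "c2 \<in> orb i ` Q" "c1 \<noteq> c2"
      then obtain C1 C2 where C: "C1 \<in> Q" "C2 \<in> Q" "c1 = orb i C1" "c2 = orb i C2" "c1 \<noteq> c2" by blast
      show "c1 \<inter> c2 = {}"
      proof (rule ccontr)
        assume "c1 \<inter> c2 \<noteq> {}"
        then obtain D where D: "D \<in> orb i C1" "D \<in> orb i C2" using C by blast
        have "orb i D = orb i C1" by (rule orb_eq[OF C(1) i D(1)])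
        moreover have "orb i D = orb i C2" by (rule orb_eq[OF C(2) i D(2)])
        ultimately have "c1 = c2" using C by simp
        then show False using C by simp
      qed
    qed
  qed
  also have "\<dots> = j" using UQ by simp
  finally show ?thesis .
qed

end


context RS begin

lemma lift_pw_rel:
  assumes R'w: "R' \<subseteq> words {..<K}" and i: "i < r" and C: "C \<in> Q"
    and hyp: "pres_rel {..<K} R' (lift (rep i C) (pw (u i) (m i))) []"
  shows "pres_rel {..<K} R' (lift C (pw (u i) (m i))) []"
proof -
  interpret G2: pres "{..<K}" R' by unfold_locales (rule R'w)
  define D0 where "D0 = rep i C"
  have D0: "D0 \<in> Q" unfolding D0_def using rep_Q[OF C i] .
  obtain s where s: "C = act D0 (pw (u i) s)" using in_orb_rep[OF C i] unfolding D0_def by blast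
  have uw: "u i \<in> words {..<n}" using u_words i by simp
  have ws: "pw (u i) s \<in> words {..<n}" "pw (u i) (m i) \<in> words {..<n}" using pw_words[OF uw] by auto
  define Xw0 where "Xw0 = lift D0 (pw (u i) s)"
  define Yw0 where "Yw0 = lift C (pw (u i) (m i))"
  define Zw0 where "Zw0 = lift D0 (pw (u i) (m i))"
  have Xw: "Xw0 \<in> words {..<K}" unfolding Xw0_def using lift_words[OF D0 ws(1)] .
  have Yw: "Yw0 \<in> words {..<K}" unfolding Yw0_def using lift_words[OF C ws(2)] .
  have e1: "lift D0 (pw (u i) s @ pw (u i) (m i)) = Xw0 @ Yw0"
    unfolding Xw0_def Yw0_def using lift_app[OF D0 ws] s by simp
  have am: "act D0 (pw (u i) (m i)) = D0" using act_rel[OF u_rel[OF i]] D0 by simp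
  have e2: "lift D0 (pw (u i) (m i) @ pw (u i) s) = Zw0 @ Xw0"
    unfolding Xw0_def Zw0_def using lift_app[OF D0 ws(2,1)] am by simp
  have XY: "Xw0 @ Yw0 = Zw0 @ Xw0" using e1 e2 pw_comm by metis
  have Z0: "G2.rel Zw0 []" using hyp unfolding Zw0_def D0_def .
  have "G2.rel (winv Xw0 @ (Xw0 @ Yw0)) (winv Xw0 @ ([] @ Xw0))"
    using XY G2.rel_app[OF G2.rel_refl G2.rel_app[OF Z0 G2.rel_refl]] Xw by simp
  then have A: "G2.rel (winv Xw0 @ Xw0 @ Yw0) (winv Xw0 @ Xw0)" by simp
  have A2: "G2.rel (winv Xw0 @ Xw0 @ Yw0) []"
    by (rule G2.rel_trans[OF A G2.rel_winv_left[OF Xw]])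
  have "G2.rel ((winv Xw0 @ Xw0) @ Yw0) ([] @ Yw0)"
    by (rule G2.rel_app[OF G2.rel_winv_left[OF Xw] G2.rel_refl[OF Yw]])
  then have B: "G2.rel (winv Xw0 @ Xw0 @ Yw0) Yw0" by simp
  show ?thesis unfolding Yw0_def[symmetric] by (rule G2.rel_trans[OF G2.rel_sym[OF B] A2])
qed

end

locale RS2 = RS +
  fixes t :: "fword set set \<Rightarrow> fword" and E :: "nat set"
  assumes t_H: "t H = []"
    and E_fin: "finite E" and E_card: "card E \<le> j - 1"
    and t_prop: "\<forall>C\<in>Q. t C \<in> words {..<n} \<and> act H (t C) = C \<and> fst ` set (lift H (t C)) \<subseteq> E"
    and E_prop: "\<forall>e\<in>E. \<exists>c\<in>Q. \<exists>a<n. e = gi c a \<and> edge_ok t c a"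
begin

definition Rtree where "Rtree = (\<lambda>e. [(e, True)]) ` E"
definition Rcyc where "Rcyc = (\<Union>i<r. (\<lambda>C. lift (rep i C) (pw (u i) (m i))) ` Q)"
definition Rr where "Rr = Rtree \<union> Rcyc"

lemma E_K: "E \<subseteq> {..<K}" using E_prop gi_lt by auto

lemma Rr_words: "Rr \<subseteq> words {..<K}"
proof -
  have "Rtree \<subseteq> words {..<K}" unfolding Rtree_def using E_K by auto
  moreover have "Rcyc \<subseteq> words {..<K}" unfolding Rcyc_def
    using lift_words rep_Q pw_words u_words by blast
  ultimately show ?thesis unfolding Rr_def by simp
qed

end

sublocale RS2 \<subseteq> G2: pres "{..<K}" Rr by unfold_locales (rule Rr_words)

context RS2 begin

lemma tC: "C \<in> Q \<Longrightarrow> t C \<in> words {..<n}" using t_prop by blast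
lemma tC_act: "C \<in> Q \<Longrightarrow> act H (t C) = C" using t_prop by blast
lemma tC_E: "C \<in> Q \<Longrightarrow> fst ` set (lift H (t C)) \<subseteq> E" using t_prop by blast

definition piece where
  "piece g = t (dcos g) @ [(dgen g, True)] @ winv (t (act (dcos g) [(dgen g, True)]))"

primrec unl :: "fword \<Rightarrow> fword" where
  "unl [] = []"
| "unl (x # w) = (if snd x then piece (fst x) else winv (piece (fst x))) @ unl w"

lemma piece_words: "g < K \<Longrightarrow> piece g \<in> words {..<n}"
proof -
  assume g: "g < K"
  have d: "dcos g \<in> Q" "dgen g < n" using gi_dec[OF g] by auto
  have "act (dcos g) [(dgen g, True)] \<in> Q" using act_Q[OF d(1)] d(2) by simp
  then show ?thesis unfolding piece_def using tC d by simp
qed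

lemma unl_words: "w \<in> words {..<K} \<Longrightarrow> unl w \<in> words {..<n}"
  by (induction w) (auto simp: piece_words)

lemma unl_app: "unl (v @ w) = unl v @ unl w"
  by (induction v) auto

lemma piece_act: "g < K \<Longrightarrow> act H (piece g) = H"
proof -
  assume g: "g < K"
  define c where "c = dcos g"
  define a where "a = dgen g"
  define c' where "c' = act c [(a, True)]"
  have d: "c \<in> Q" "a < n" using gi_dec[OF g] unfolding c_def a_def by auto
  have aw: "[(a, True)] \<in> words {..<n}" using d by simp
  have c': "c' \<in> Q" unfolding c'_def using act_Q[OF d(1) aw] .
  have pe: "piece g = t c @ [(a, True)] @ winv (t c')"
    unfolding piece_def c_def a_def c'_def by simp
  have "act H (piece g) = act (act (act H (t c)) [(a, True)]) (winv (t c'))"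
  proof -
    have tcw: "t c \<in> words {..<n}" "winv (t c') \<in> words {..<n}" using tC d c' by auto
    have h1: "act H (t c) \<in> Q" using act_Q[OF H_Q tcw(1)] .
    have "act H (t c @ [(a, True)] @ winv (t c')) = act (act H (t c)) ([(a, True)] @ winv (t c'))"
      using act_app[OF H_Q tcw(1)] aw tcw(2) by simp
    also have "\<dots> = act (act (act H (t c)) [(a, True)]) (winv (t c'))"
      using act_app[OF h1 aw tcw(2)] .
    finally show ?thesis using pe by simp
  qed
  also have "\<dots> = act (act H (t c')) (winv (t c'))"
    using tC_act d c' unfolding c'_def by simp
  also have "\<dots> = H" using act_inv[OF H_Q tC[OF c']] .
  finally show ?thesis .
qed

lemma unl_act: "w \<in> words {..<K} \<Longrightarrow> act H (unl w) = H"
proof (induction w)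
  case Nil then show ?case using H_Q by simp
next
  case (Cons x w)
  have g: "fst x < K" "w \<in> words {..<K}" using Cons.prems by auto
  have p: "piece (fst x) \<in> words {..<n}" using piece_words[OF g(1)] .
  have pa: "act H (piece (fst x)) = H" using piece_act[OF g(1)] .
  have pa': "act H (winv (piece (fst x))) = H"
    using act_inv[OF H_Q p] pa by simp
  show ?case
    using act_app[OF H_Q _ unl_words[OF g(2)], of "piece (fst x)"]
      act_app[OF H_Q _ unl_words[OF g(2)], of "winv (piece (fst x))"] p pa pa' Cons.IH[OF g(2)]
    by simp
qed

lemma unl_H: "w \<in> words {..<K} \<Longrightarrow> cls (unl w) \<in> H"
  using unl_act rho_one_iff act_one unl_words one_Qg by metis


lemma unl_lift_step: "C \<in> Q \<Longrightarrow> fst x < n \<Longrightarrow>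
   unl (lift C (x # w)) = (t C @ [x] @ winv (t (act C [x]))) @ unl (lift (act C [x]) w)"
proof -
  assume C: "C \<in> Q" and a: "fst x < n"
  obtain a0 b where x: "x = (a0, b)" by (cases x)
  have xw: "[x] \<in> words {..<n}" using a by simp
  have C': "act C [x] \<in> Q" using act_Q[OF C xw] .
  show ?thesis
  proof (cases b)
    case True
    have "piece (gi C a0) = t C @ [x] @ winv (t (act C [x]))"
      unfolding piece_def using dec_gi[OF C] a x True by simp
    then show ?thesis using x True by simp
  next
    case False
    have bk: "act (act C [x]) [(a0, True)] = C" using act_inv[OF C xw] x False by simp
    have "piece (gi (act C [x]) a0) = t (act C [x]) @ [(a0, True)] @ winv (t C)"
      unfolding piece_def using dec_gi[OF C'] a x bk by simp
    then show ?thesis using x False by simp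
  qed
qed

lemma unl_lift: "C \<in> Q \<Longrightarrow> w \<in> words {..<n} \<Longrightarrow>
    rel (unl (lift C w)) (t C @ w @ winv (t (act C w)))"
proof (induction w arbitrary: C)
  case Nil
  show ?case using rel_sym[OF rel_winv_right[OF tC[OF Nil.prems(1)]]] Nil.prems by simp
next
  case (Cons x w)
  have xw: "[x] \<in> words {..<n}" "w \<in> words {..<n}" "fst x < n" using Cons.prems by auto
  define C' where "C' = act C [x]"
  have C': "C' \<in> Q" unfolding C'_def using act_Q[OF Cons.prems(1) xw(1)] .
  have tw: "t C \<in> words {..<n}" "t C' \<in> words {..<n}" using tC Cons.prems(1) C' by auto
  define T where "T = winv (t (act C' w))"
  have Tw: "T \<in> words {..<n}" unfolding T_def using tC act_Q[OF C' xw(2)] by simp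
  have IH: "rel (unl (lift C' w)) (t C' @ w @ T)" using Cons.IH[OF C' xw(2)] unfolding T_def .
  have 1: "rel ((t C @ [x] @ winv (t C')) @ unl (lift C' w)) ((t C @ [x] @ winv (t C')) @ (t C' @ w @ T))"
    by (rule rel_app[OF rel_refl IH]) (use tw xw in simp)
  have 2: "rel ((t C @ [x]) @ ((winv (t C') @ t C') @ (w @ T))) ((t C @ [x]) @ ([] @ (w @ T)))"
    by (rule rel_app[OF rel_refl rel_app[OF rel_winv_left rel_refl]]) (use tw xw Tw in simp_all)
  have e: "act C (x # w) = act C' w" unfolding C'_def using act_app[OF Cons.prems(1) xw(1,2)] by simp
  show ?case
    using rel_trans[OF 1[simplified] 2[simplified]] unl_lift_step[OF Cons.prems(1) xw(3), of w] e
    unfolding C'_def[symmetric] T_def by simp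
qed

lemma gens_E: "w \<in> words {..<K} \<Longrightarrow> fst ` set w \<subseteq> E \<Longrightarrow> G2.rel w []"
proof (induction w)
  case Nil then show ?case by simp
next
  case (Cons x w)
  obtain e b where x: "x = (e, b)" by (cases x)
  have e: "e \<in> E" using Cons.prems x by auto
  have r1: "G2.rel [(e, True)] []"
  proof -
    have "[(e, True)] \<in> Rr" unfolding Rr_def Rtree_def using e by auto
    then show ?thesis using pres_rel.relator[of "[]" "{..<K}" "[]" "[(e, True)]" Rr] by simp
  qed
  have r2: "G2.rel [(e, b)] []"
  proof (cases b)
    case True then show ?thesis using r1 by simp
  next
    case False then show ?thesis using G2.rel_winv_cong[OF r1] by simp
  qed
  have "G2.rel ([(e, b)] @ w) ([] @ [])"
    by (rule G2.rel_app[OF r2 Cons.IH]) (use Cons.prems x in auto)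
  then show ?case using x by simp
qed

lemma lift_piece: "g < K \<Longrightarrow> G2.rel (lift H (piece g)) [(g, True)]"
proof -
  assume g: "g < K"
  define c where "c = dcos g"
  define a where "a = dgen g"
  define c' where "c' = act c [(a, True)]"
  have d: "c \<in> Q" "a < n" "gi c a = g" using gi_dec[OF g] unfolding c_def a_def by auto
  have aw: "[(a, True)] \<in> words {..<n}" using d by simp
  have c': "c' \<in> Q" unfolding c'_def using act_Q[OF d(1) aw] .
  have tw: "t c \<in> words {..<n}" "t c' \<in> words {..<n}" "winv (t c') \<in> words {..<n}" using tC d c' by auto
  have pe: "piece g = t c @ [(a, True)] @ winv (t c')"
    unfolding piece_def c_def a_def c'_def by simp
  have "lift H (piece g) = lift H (t c) @ lift c ([(a, True)] @ winv (t c'))"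
    unfolding pe using lift_app[OF H_Q tw(1)] aw tw tC_act[OF d(1)] by simp
  also have "\<dots> = lift H (t c) @ [(g, True)] @ lift c' (winv (t c'))"
    using lift_app[OF d(1) aw tw(3)] d unfolding c'_def by simp
  also have "lift c' (winv (t c')) = winv (lift H (t c'))"
    using lift_winv[OF H_Q tw(2)] tC_act[OF c'] by simp
  finally have e: "lift H (piece g) = lift H (t c) @ [(g, True)] @ winv (lift H (t c'))" .
  have l1: "G2.rel (lift H (t c)) []" using gens_E lift_words[OF H_Q tw(1)] tC_E[OF d(1)] by blast
  have l2: "G2.rel (winv (lift H (t c'))) []"
    using G2.rel_winv_cong[OF gens_E[OF lift_words[OF H_Q tw(2)] tC_E[OF c']]] by simp
  have gw: "[(g, True)] \<in> words {..<K}" using g by simp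
  have "G2.rel (lift H (t c) @ [(g, True)] @ winv (lift H (t c'))) ([] @ [(g, True)] @ [])"
    by (rule G2.rel_app[OF l1 G2.rel_app[OF G2.rel_refl[OF gw] l2]])
  then show ?thesis using e by simp
qed

lemma lift_unl: "v \<in> words {..<K} \<Longrightarrow> G2.rel (lift H (unl v)) v"
proof (induction v)
  case Nil then show ?case by simp
next
  case (Cons x v)
  obtain g b where x: "x = (g, b)" by (cases x)
  have g: "g < K" "v \<in> words {..<K}" using Cons.prems x by auto
  have p: "piece g \<in> words {..<n}" using piece_words[OF g(1)] .
  have pa: "act H (piece g) = H" using piece_act[OF g(1)] .
  define p' where "p' = (if b then piece g else winv (piece g))"
  have p'w: "p' \<in> words {..<n}" unfolding p'_def using p by simp
  have pa': "act H p' = H" unfolding p'_def using pa act_inv[OF H_Q p] by simp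
  have lp: "G2.rel (lift H p') [(g, b)]"
  proof (cases b)
    case True then show ?thesis unfolding p'_def using lift_piece[OF g(1)] by simp
  next
    case False
    have "lift H (winv (piece g)) = winv (lift H (piece g))"
      using lift_winv[OF H_Q p] pa by simp
    then show ?thesis unfolding p'_def using False G2.rel_winv_cong[OF lift_piece[OF g(1)]] by simp
  qed
  have "unl (x # v) = p' @ unl v" unfolding p'_def using x by simp
  then have "lift H (unl (x # v)) = lift H p' @ lift H (unl v)"
    using lift_app[OF H_Q p'w unl_words[OF g(2)]] pa' by simp
  moreover have "G2.rel (lift H p' @ lift H (unl v)) ([(g, b)] @ v)"
    by (rule G2.rel_app[OF lp Cons.IH[OF g(2)]])
  ultimately show ?case using x by simp
qed


lemma unl_Rr: "z \<in> Rr \<Longrightarrow> rel (unl z) []"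
proof -
  assume "z \<in> Rr"
  then consider (tr) e where "e \<in> E" "z = [(e, True)]"
    | (cy) i C where "i < r" "C \<in> Q" "z = lift (rep i C) (pw (u i) (m i))"
    unfolding Rr_def Rtree_def Rcyc_def by blast
  then show ?thesis
  proof cases
    case tr
    obtain c a where ca: "c \<in> Q" "a < n" "e = gi c a" "edge_ok t c a" using E_prop tr(1) by blast
    define c' where "c' = act c [(a, True)]"
    have aw: "[(a, True)] \<in> words {..<n}" using ca by simp
    have c': "c' \<in> Q" unfolding c'_def using act_Q[OF ca(1) aw] .
    have pe: "unl z = t c @ [(a, True)] @ winv (t c')"
      using tr(2) dec_gi[OF ca(1,2)] ca(3) unfolding c'_def by (simp add: piece_def)
    from ca(4) consider "t c' = t c @ [(a, True)]" | "t c = t c' @ [(a, False)]"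
      unfolding edge_ok_def c'_def by blast
    then show ?thesis
    proof cases
      case 1
      then show ?thesis using pe rel_winv_right[OF tC[OF c']] by simp
    next
      case 2
      have "rel (t c' @ [(a, False), (a, \<not> False)] @ winv (t c')) (t c' @ winv (t c'))"
        by (rule pres_rel.cancel) (use tC[OF c'] ca in auto)
      then have "rel (unl z) (t c' @ winv (t c'))" using pe 2 by simp
      then show ?thesis using rel_trans rel_winv_right[OF tC[OF c']] by blast
    qed
  next
    case cy
    define D where "D = rep i C"
    have D: "D \<in> Q" unfolding D_def using rep_Q[OF cy(2,1)] .
    have uw: "pw (u i) (m i) \<in> words {..<n}" using pw_words u_words cy(1) by simp
    have am: "act D (pw (u i) (m i)) = D" using act_rel[OF u_rel[OF cy(1)]] D by simp
    have 1: "rel (unl z) (t D @ pw (u i) (m i) @ winv (t D))"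
      using unl_lift[OF D uw] am cy(3) unfolding D_def by simp
    have 2: "rel (t D @ pw (u i) (m i) @ winv (t D)) (t D @ [] @ winv (t D))"
      by (rule rel_app[OF rel_refl rel_app[OF u_rel[OF cy(1)] rel_refl]]) (use tC[OF D] in simp_all)
    show ?thesis using rel_trans[OF rel_trans[OF 1 2] ] rel_winv_right[OF tC[OF D]] by simp
  qed
qed

lemma unl_rel: "G2.rel v w \<Longrightarrow> rel (unl v) (unl w)"
proof (induction rule: pres_rel.induct)
  case (cancel x y g b)
  have g: "g < K" using cancel by simp
  have p: "piece g \<in> words {..<n}" using piece_words[OF g] .
  have c: "rel (unl [(g, b), (g, \<not> b)]) []"
    using rel_winv_right[OF p] rel_winv_left[OF p] by (cases b) auto
  have "rel (unl x @ unl [(g, b), (g, \<not> b)] @ unl y) (unl x @ [] @ unl y)"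
    by (rule rel_app[OF rel_refl rel_app[OF c rel_refl]]) (use unl_words cancel in auto)
  then show ?case by (simp add: unl_app)
next
  case (relator x y z)
  have "rel (unl x @ unl z @ unl y) (unl x @ [] @ unl y)"
    by (rule rel_app[OF rel_refl rel_app[OF unl_Rr[OF relator(3)] rel_refl]]) (use unl_words relator in auto)
  then show ?case by (simp add: unl_app)
next
  case (refl w) then show ?case using unl_words by simp
next
  case (sym v w) then show ?case using rel_sym by blast
next
  case (trans x v w) then show ?case using rel_trans by blast
qed

lemma lift_relH: "rel v w \<Longrightarrow> G2.rel (lift H v) (lift H w)"
proof -
  assume vw: "rel v w"
  have "\<forall>D\<in>Q. \<forall>z\<in>pow_relators r u m. G2.rel (lift D z) []"
  proof (intro ballI)
    fix D z assume D: "D \<in> Q" and z: "z \<in> pow_relators r u m"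
    then obtain i where i: "i < r" "z = pw (u i) (m i)" unfolding pow_relators_def pw_def by blast
    have "lift (rep i D) (pw (u i) (m i)) \<in> Rr" unfolding Rr_def Rcyc_def using i D by blast
    then have "G2.rel (lift (rep i D) (pw (u i) (m i))) []"
      using pres_rel.relator[of "[]" "{..<K}" "[]" _ Rr] by simp
    then show "G2.rel (lift D z) []" using lift_pw_rel[OF Rr_words i(1) D] i by simp
  qed
  then show ?thesis using lift_rel[OF Rr_words _ vw] H_Q by blast
qed


definition Phi where "Phi Xs = cls (unl (SOME v. v \<in> Xs))"

lemma Phi_cls: "v \<in> words {..<K} \<Longrightarrow> Phi (G2.cls v) = cls (unl v)"
proof -
  assume v: "v \<in> words {..<K}"
  have "v \<in> G2.cls v" using G2.cls_mem[OF v] .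
  then have "(SOME v'. v' \<in> G2.cls v) \<in> G2.cls v" by (rule someI)
  then have "G2.rel v (SOME v'. v' \<in> G2.cls v)" unfolding pres_class_def by simp
  then have "rel (unl v) (unl (SOME v'. v' \<in> G2.cls v))" by (rule unl_rel)
  then have "cls (unl v) = cls (unl (SOME v'. v' \<in> G2.cls v))" using cls_eq_iff[OF unl_words[OF v]] by simp
  then show ?thesis unfolding Phi_def by simp
qed

lemma Phi_iso: "Phi \<in> iso G2.P (P\<lparr>carrier := H\<rparr>)"
proof -
  have hom: "Phi \<in> hom G2.P (P\<lparr>carrier := H\<rparr>)"
  proof (rule homI)
    fix x assume "x \<in> carrier G2.P"
    then obtain v where v: "v \<in> words {..<K}" "x = G2.cls v" by (rule G2.carrier_PE)
    show "Phi x \<in> carrier (P\<lparr>carrier := H\<rparr>)" using v Phi_cls unl_H by simp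
  next
    fix x y assume "x \<in> carrier G2.P" "y \<in> carrier G2.P"
    then obtain v w where v: "v \<in> words {..<K}" "x = G2.cls v" "w \<in> words {..<K}" "y = G2.cls w"
      by (metis G2.carrier_PE)
    show "Phi (x \<otimes>\<^bsub>G2.P\<^esub> y) = Phi x \<otimes>\<^bsub>P\<lparr>carrier := H\<rparr>\<^esub> Phi y"
      using v by (simp add: G2.mult_P Phi_cls unl_app mult_P unl_words)
  qed
  have inj: "inj_on Phi (carrier G2.P)"
  proof (rule inj_onI)
    fix x y assume "x \<in> carrier G2.P" "y \<in> carrier G2.P" and e: "Phi x = Phi y"
    then obtain v w where v: "v \<in> words {..<K}" "x = G2.cls v" "w \<in> words {..<K}" "y = G2.cls w"
      by (metis G2.carrier_PE)
    have "cls (unl v) = cls (unl w)" using e v Phi_cls by simp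
    then have "rel (unl v) (unl w)" using cls_eq_iff unl_words v by blast
    then have "G2.rel (lift H (unl v)) (lift H (unl w))" by (rule lift_relH)
    then have "G2.rel v w"
      using lift_unl[OF v(1)] lift_unl[OF v(3)] G2.rel_trans G2.rel_sym by blast
    then show "x = y" using v G2.cls_eq_iff by simp
  qed
  have surj: "Phi ` carrier G2.P = H"
  proof
    show "Phi ` carrier G2.P \<subseteq> H"
      using hom unfolding hom_def by auto
  next
    show "H \<subseteq> Phi ` carrier G2.P"
    proof
      fix h assume h: "h \<in> H"
      then have "h \<in> carrier P" using N.subset by blast
      then obtain w where w: "w \<in> words {..<n}" "h = cls w" by (rule carrier_PE)
      have aw: "act H w = H" using act_H[OF H_Q w(1)] h w by simp
      have "rel (unl (lift H w)) (t H @ w @ winv (t (act H w)))" using unl_lift[OF H_Q w(1)] .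
      then have "rel (unl (lift H w)) w" using aw t_H by simp
      then have "Phi (G2.cls (lift H w)) = h"
        using Phi_cls[OF lift_words[OF H_Q w(1)]] cls_eq_iff unl_words lift_words[OF H_Q w(1)] w by blast
      moreover have "G2.cls (lift H w) \<in> carrier G2.P" using lift_words[OF H_Q w(1)] by simp
      ultimately show "h \<in> Phi ` carrier G2.P" by blast
    qed
  qed
  show ?thesis unfolding iso_def using hom inj surj by (simp add: bij_betw_def)
qed

lemma H_iso: "P\<lparr>carrier := H\<rparr> \<cong> pres_group {..<K} Rr"
  using group.iso_sym[OF G2.group_P] is_isoI[OF Phi_iso] by blast

lemma Rr_fin: "finite Rr"
  unfolding Rr_def Rtree_def Rcyc_def using E_fin Hfin by simp

lemma card_Rcyc: "card Rcyc \<le> (\<Sum>i<r. card (orb i ` Q))"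
proof -
  have "card Rcyc \<le> (\<Sum>i<r. card ((\<lambda>C. lift (rep i C) (pw (u i) (m i))) ` Q))"
    unfolding Rcyc_def by (rule card_UN_le) simp
  also have "\<dots> \<le> (\<Sum>i<r. card (orb i ` Q))"
  proof (rule sum_mono)
    fix i
    have "(\<lambda>C. lift (rep i C) (pw (u i) (m i))) ` Q = (\<lambda>Os. lift (SOME D. D \<in> Os) (pw (u i) (m i))) ` (orb i ` Q)"
      unfolding rep_def by (simp add: image_image)
    then show "card ((\<lambda>C. lift (rep i C) (pw (u i) (m i))) ` Q) \<le> card (orb i ` Q)"
      by (simp add: card_image_le Hfin)
  qed
  finally show ?thesis .
qed

lemma card_Rr: "card Rr \<le> card E + (\<Sum>i<r. card (orb i ` Q))"
proof -
  have "card Rr \<le> card Rtree + card Rcyc" unfolding Rr_def by (rule card_Un_le)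
  moreover have "card Rtree \<le> card E" unfolding Rtree_def by (rule card_image_le[OF E_fin])
  ultimately show ?thesis using card_Rcyc by linarith
qed

lemma def_bound:
  "deficiency (P\<lparr>carrier := H\<rparr>) \<ge> ereal (1 + real j * ((real n - (\<Sum>i<r. 1 / real (kk i))) - 1))"
proof -
  have mem: "ereal (real K - real (card Rr)) \<in> {ereal (real k - real (card R)) | k R.
       finite R \<and> R \<subseteq> words {..<k} \<and> P\<lparr>carrier := H\<rparr> \<cong> pres_group {..<k} R}"
    using Rr_fin Rr_words H_iso by blast
  have orbs: "\<And>i. i < r \<Longrightarrow> real (card (orb i ` Q)) = real j * (1 / real (kk i))"
  proof -
    fix i assume i: "i < r"
    have "real (kk i) * real (card (orb i ` Q)) = real j" using card_orbits[OF i] of_nat_mult by metis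
    then show "real (card (orb i ` Q)) = real j * (1 / real (kk i))" using kk_pos[OF i]
      by (simp add: field_simps)
  qed
  have "real (card Rr) \<le> real (card E) + (\<Sum>i<r. real (card (orb i ` Q)))"
    using card_Rr by (metis of_nat_add of_nat_le_iff of_nat_sum)
  also have "\<dots> \<le> (real j - 1) + real j * (\<Sum>i<r. 1 / real (kk i))"
  proof -
    have "real (card E) \<le> real j - 1" using E_card j_pos by linarith
    moreover have "(\<Sum>i<r. real (card (orb i ` Q))) = real j * (\<Sum>i<r. 1 / real (kk i))"
      using orbs by (simp add: sum_distrib_left)
    ultimately show ?thesis by linarith
  qed
  finally have "1 + real j * ((real n - (\<Sum>i<r. 1 / real (kk i))) - 1) \<le> real K - real (card Rr)"
    unfolding K_def by (simp add: algebra_simps)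
  then have "ereal (1 + real j * ((real n - (\<Sum>i<r. 1 / real (kk i))) - 1)) \<le> ereal (real K - real (card Rr))"
    by simp
  also have "\<dots> \<le> deficiency (P\<lparr>carrier := H\<rparr>)"
    unfolding deficiency_def using mem by (rule Sup_upper)
  finally show ?thesis .
qed

end

lemma (in RS) main_bound:
  "deficiency (P\<lparr>carrier := H\<rparr>) \<ge> ereal (1 + real j * ((real n - (\<Sum>i<r. 1 / real (kk i))) - 1))"
proof -
  from transversal obtain t E where tE0: "t H = [] \<and> finite E \<and> card E \<le> j - 1
     \<and> (\<forall>C\<in>Q. t C \<in> words {..<n} \<and> act H (t C) = C \<and> fst ` set (lift H (t C)) \<subseteq> E)
     \<and> (\<forall>e\<in>E. \<exists>c\<in>Q. \<exists>a<n. e = gi c a \<and> edge_ok t c a)"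
    by (elim exE)
  have tE1: "t H = []" using tE0 by blast
  have tE2: "finite E" using tE0 by blast
  have tE3: "card E \<le> j - 1" using tE0 by blast
  have tE4: "\<forall>C\<in>Q. t C \<in> words {..<n} \<and> act H (t C) = C \<and> fst ` set (lift H (t C)) \<subseteq> E"
    using tE0 by blast
  have tE5: "\<forall>e\<in>E. \<exists>c\<in>Q. \<exists>a<n. e = gi c a \<and> edge_ok t c a" using tE0 by blast
  note tE = tE1 tE2 tE3 tE4 tE5
  interpret X: RS2 n r u m H t E
    by (rule RS2.intro[OF RS_axioms RS2_axioms.intro[OF tE]])
  show ?thesis by (rule X.def_bound)
qed



context group begin

definition core :: "'a set set \<Rightarrow> 'a set" where
  "core SS = {h \<in> carrier G. \<forall>S\<in>SS. \<forall>y\<in>carrier G. y \<otimes> h \<otimes> inv y \<in> S}"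

lemma inv_cancel_l: "y \<in> carrier G \<Longrightarrow> z \<in> carrier G \<Longrightarrow> inv y \<otimes> (y \<otimes> z) = z"
  by (simp add: m_assoc[symmetric])

lemma core_mem: "h \<in> core SS \<Longrightarrow> S \<in> SS \<Longrightarrow> y \<in> carrier G \<Longrightarrow> y \<otimes> h \<otimes> inv y \<in> S"
  unfolding core_def by simp
lemma core_carrier: "h \<in> core SS \<Longrightarrow> h \<in> carrier G"
  unfolding core_def by simp
lemma core_memI: "h \<in> carrier G \<Longrightarrow> (\<And>S y. S \<in> SS \<Longrightarrow> y \<in> carrier G \<Longrightarrow> y \<otimes> h \<otimes> inv y \<in> S) \<Longrightarrow> h \<in> core SS"
  unfolding core_def by simp

lemma core_sub: "S \<in> SS \<Longrightarrow> subgroup S G \<Longrightarrow> core SS \<subseteq> S"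
proof
  fix h assume S: "S \<in> SS" "subgroup S G" and h: "h \<in> core SS"
  have "\<one> \<otimes> h \<otimes> inv \<one> \<in> S" by (rule core_mem[OF h S(1) one_closed])
  then show "h \<in> S" using core_carrier[OF h] by simp
qed

lemma core_subgroup: assumes SS: "\<And>S. S \<in> SS \<Longrightarrow> subgroup S G" shows "subgroup (core SS) G"
proof (rule subgroupI)
  show "core SS \<subseteq> carrier G" using core_carrier by blast
  have "\<one> \<in> core SS"
  proof (rule core_memI[OF one_closed])
    fix S y assume "S \<in> SS" "y \<in> carrier G"
    then show "y \<otimes> \<one> \<otimes> inv y \<in> S" using subgroup.one_closed[OF SS] by simp
  qed
  then show "core SS \<noteq> {}" by blast
  show "\<And>a. a \<in> core SS \<Longrightarrow> inv a \<in> core SS"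
  proof -
    fix a assume a: "a \<in> core SS"
    have ac: "a \<in> carrier G" using core_carrier[OF a] .
    show "inv a \<in> core SS"
    proof (rule core_memI[OF inv_closed[OF ac]])
      fix S y assume S: "S \<in> SS" and y: "y \<in> carrier G"
      have "inv (y \<otimes> a \<otimes> inv y) \<in> S"
        by (rule subgroup.m_inv_closed[OF SS[OF S] core_mem[OF a S y]])
      also have "inv (y \<otimes> a \<otimes> inv y) = y \<otimes> inv a \<otimes> inv y"
        using ac y by (simp add: inv_mult_group m_assoc)
      finally show "y \<otimes> inv a \<otimes> inv y \<in> S" .
    qed
  qed
  show "\<And>a b. a \<in> core SS \<Longrightarrow> b \<in> core SS \<Longrightarrow> a \<otimes> b \<in> core SS"
  proof -
    fix a b assume a: "a \<in> core SS" and b: "b \<in> core SS"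
    have ac: "a \<in> carrier G" "b \<in> carrier G" using core_carrier a b by auto
    show "a \<otimes> b \<in> core SS"
    proof (rule core_memI)
      show "a \<otimes> b \<in> carrier G" using ac by simp
      fix S y assume S: "S \<in> SS" and y: "y \<in> carrier G"
      have "(y \<otimes> a \<otimes> inv y) \<otimes> (y \<otimes> b \<otimes> inv y) \<in> S"
        by (rule subgroup.m_closed[OF SS[OF S] core_mem[OF a S y] core_mem[OF b S y]])
      also have "(y \<otimes> a \<otimes> inv y) \<otimes> (y \<otimes> b \<otimes> inv y) = y \<otimes> (a \<otimes> b) \<otimes> inv y"
        using ac y by (simp add: m_assoc inv_cancel_l)
      finally show "y \<otimes> (a \<otimes> b) \<otimes> inv y \<in> S" .
    qed
  qed
qed

lemma core_normal: assumes SS: "\<And>S. S \<in> SS \<Longrightarrow> subgroup S G" shows "core SS \<lhd> G"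
proof (rule normal_invI[OF core_subgroup[OF SS]])
  fix x h assume x: "x \<in> carrier G" and h: "h \<in> core SS"
  have hc: "h \<in> carrier G" using core_carrier[OF h] .
  show "x \<otimes> h \<otimes> inv x \<in> core SS"
  proof (rule core_memI)
    show "x \<otimes> h \<otimes> inv x \<in> carrier G" using x hc by simp
    fix S y assume S: "S \<in> SS" and y: "y \<in> carrier G"
    have "(y \<otimes> x) \<otimes> h \<otimes> inv (y \<otimes> x) \<in> S" by (rule core_mem[OF h S m_closed[OF y x]])
    also have "(y \<otimes> x) \<otimes> h \<otimes> inv (y \<otimes> x) = y \<otimes> (x \<otimes> h \<otimes> inv x) \<otimes> inv y"
      using x y hc by (simp add: inv_mult_group m_assoc)
    finally show "y \<otimes> (x \<otimes> h \<otimes> inv x) \<otimes> inv y \<in> S" .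
  qed
qed

lemma rcos_eq_mem: "subgroup S G \<Longrightarrow> a \<in> carrier G \<Longrightarrow> b \<in> carrier G \<Longrightarrow> S #> a = S #> b \<Longrightarrow> a \<otimes> inv b \<in> S"
  by (meson coset_join1 coset_mult_inv2 inv_closed m_closed subgroup.subset)

lemma core_finite_index:
  assumes SS: "\<And>S. S \<in> SS \<Longrightarrow> subgroup S G" and fin: "finite SS"
    and fi: "\<And>S. S \<in> SS \<Longrightarrow> finite (rcosets S)"
  shows "finite (rcosets (core SS))"
proof -
  define F where "F y = (\<lambda>S\<in>SS. \<lambda>C\<in>rcosets S. C #> y)" for y
  have Fm: "F ` carrier G \<subseteq> (\<Pi>\<^sub>E S\<in>SS. (rcosets S) \<rightarrow>\<^sub>E (rcosets S))"
  proof
    fix f assume "f \<in> F ` carrier G"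
    then obtain y where y: "y \<in> carrier G" "f = F y" by blast
    have "\<And>S C. S \<in> SS \<Longrightarrow> C \<in> rcosets S \<Longrightarrow> C #> y \<in> rcosets S"
    proof -
      fix S C assume S: "S \<in> SS" and C: "C \<in> rcosets S"
      then obtain x where x: "x \<in> carrier G" "C = S #> x" unfolding RCOSETS_def by blast
      have "C #> y = S #> (x \<otimes> y)" using x y coset_mult_assoc subgroup.subset SS S by metis
      then show "C #> y \<in> rcosets S" using x y by (simp add: rcosetsI subgroup.subset SS S)
    qed
    then show "f \<in> (\<Pi>\<^sub>E S\<in>SS. (rcosets S) \<rightarrow>\<^sub>E (rcosets S))" unfolding y F_def by auto
  qed
  have finF: "finite (F ` carrier G)"
    by (rule finite_subset[OF Fm]) (intro finite_PiE fin fi, simp add: fi)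
  have key: "\<And>y y'. y \<in> carrier G \<Longrightarrow> y' \<in> carrier G \<Longrightarrow> F y = F y' \<Longrightarrow> core SS #> y = core SS #> y'"
  proof -
    fix y y' assume y: "y \<in> carrier G" "y' \<in> carrier G" and e: "F y = F y'"
    have "y \<otimes> inv y' \<in> core SS"
      unfolding core_def
    proof (intro CollectI conjI ballI)
      show "y \<otimes> inv y' \<in> carrier G" using y by simp
      fix S z assume S: "S \<in> SS" and z: "z \<in> carrier G"
      have Sc: "S \<subseteq> carrier G" using SS[OF S] subgroup.subset by blast
      have "S #> z \<in> rcosets S" using z Sc by (simp add: rcosetsI)
      then have "(S #> z) #> y = (S #> z) #> y'"
        using fun_cong[OF fun_cong[OF e, of S], of "S #> z"] S unfolding F_def by simp
      then have "S #> (z \<otimes> y) = S #> (z \<otimes> y')"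
        using coset_mult_assoc Sc z y by simp
      then have "(z \<otimes> y) \<otimes> inv (z \<otimes> y') \<in> S"
        using rcos_eq_mem[OF SS[OF S]] z y by simp
      also have "(z \<otimes> y) \<otimes> inv (z \<otimes> y') = z \<otimes> (y \<otimes> inv y') \<otimes> inv z"
        using z y by (simp add: inv_mult_group m_assoc)
      finally show "z \<otimes> (y \<otimes> inv y') \<otimes> inv z \<in> S" .
    qed
    then have "core SS #> (y \<otimes> inv y') = core SS"
      using coset_join2 core_subgroup[OF SS] y by simp
    then show "core SS #> y = core SS #> y'"
      using coset_mult_inv1 y core_subgroup[OF SS] subgroup.subset by blast
  qed
  define g where "g f = core SS #> (SOME y. y \<in> carrier G \<and> F y = f)" for f
  have "rcosets (core SS) \<subseteq> g ` (F ` carrier G)"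
  proof
    fix C assume "C \<in> rcosets (core SS)"
    then obtain y where y: "y \<in> carrier G" "C = core SS #> y" unfolding RCOSETS_def by blast
    have ex: "\<exists>y'. y' \<in> carrier G \<and> F y' = F y" using y by blast
    have "C = g (F y)" unfolding g_def y(2)
      using someI_ex[OF ex] key y(1) by blast
    then show "C \<in> g ` (F ` carrier G)" using y by blast
  qed
  then show ?thesis using finF by (meson finite_imageI finite_subset)
qed

end


context group begin

lemma fi_carrier: "finite_index G (carrier G)"
proof -
  have "rcosets (carrier G) \<subseteq> {carrier G}"
  proof
    fix C assume "C \<in> rcosets (carrier G)"
    then obtain x where x: "x \<in> carrier G" "C = carrier G #> x" unfolding RCOSETS_def by blast
    then show "C \<in> {carrier G}" using coset_join2[OF x(1) subgroup_self x(1)] by simp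
  qed
  then show ?thesis unfolding finite_index_def using finite_subset by blast
qed

lemma residual_subgroup: "subgroup (finite_residual G) G"
  unfolding finite_residual_def
  by (rule subgroups_Inter) (use fi_carrier subgroup_self in auto)

lemma residual_sub: "subgroup S G \<Longrightarrow> finite_index G S \<Longrightarrow> finite_residual G \<subseteq> S"
  unfolding finite_residual_def by blast

lemma residual_normal: "finite_residual G \<lhd> G"
proof (rule normal_invI[OF residual_subgroup])
  fix x h assume x: "x \<in> carrier G" and h: "h \<in> finite_residual G"
  show "x \<otimes> h \<otimes> inv x \<in> finite_residual G"
    unfolding finite_residual_def
  proof
    fix S assume "S \<in> {H. subgroup H G \<and> finite_index G H}"
    then have S: "subgroup S G" "finite_index G S" by auto
    have c1: "subgroup (core {S}) G" using core_subgroup S by blast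
    have c2: "finite_index G (core {S})" unfolding finite_index_def
      by (rule core_finite_index) (use S in \<open>auto simp: finite_index_def\<close>)
    have "h \<in> core {S}" using residual_sub[OF c1 c2] h by blast
    then show "x \<otimes> h \<otimes> inv x \<in> S" using core_mem x by blast
  qed
qed

lemma coset_one_iff: "subgroup N G \<Longrightarrow> x \<in> carrier G \<Longrightarrow> N #> x = N \<longleftrightarrow> x \<in> N"
  using coset_join1 coset_join2 by blast

lemma existence_gen:
  fixes g :: "nat \<Rightarrow> 'a" and r :: nat
  assumes g: "\<And>i. i < r \<Longrightarrow> g i \<in> carrier G"
    and pw: "\<And>i. i < r \<Longrightarrow> \<exists>m>0. g i [^] (m::nat) = \<one>"
  shows "\<exists>H. H \<lhd> G \<and> finite_index G H \<and>
     (\<forall>i<r. quot_ord G H (g i) = quot_ord G (finite_residual G) (g i))"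
proof -
  define N where "N = finite_residual G"
  interpret NN: normal N G unfolding N_def by (rule residual_normal)
  have GN: "group (G Mod N)" by (rule NN.factorgroup_is_group)
  define k where "k i = group.ord (G Mod N) (N #> g i)" for i
  have gc: "\<And>i. i < r \<Longrightarrow> N #> g i \<in> carrier (G Mod N)"
    using g by (simp add: FactGroup_def rcosetsI NN.subset)
  have powN: "\<And>i d. i < r \<Longrightarrow> (N #> g i) [^]\<^bsub>G Mod N\<^esub> (d::nat) = N #> (g i [^] d)"
    using NN.FactGroup_pow g by simp
  have oneN: "\<And>i d. i < r \<Longrightarrow> (N #> g i) [^]\<^bsub>G Mod N\<^esub> (d::nat) = \<one>\<^bsub>G Mod N\<^esub> \<longleftrightarrow> g i [^] d \<in> N"
    using powN coset_one_iff[OF NN.subgroup_axioms] g by simp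
  have dvdN: "\<And>i d. i < r \<Longrightarrow> g i [^] d \<in> N \<longleftrightarrow> k i dvd d"
    using group.pow_eq_id[OF GN gc] oneN unfolding k_def by simp
  have kpos: "\<And>i. i < r \<Longrightarrow> k i > 0"
  proof -
    fix i assume i: "i < r"
    obtain m where m: "m > 0" "g i [^] (m::nat) = \<one>" using pw[OF i] by blast
    have "g i [^] m \<in> N" using m NN.one_closed by simp
    then have "k i dvd m" using dvdN[OF i] by simp
    then show "k i > 0" using m(1) by (metis dvd_0_left_iff gr0I)
  qed
  have exS: "\<And>i d. i < r \<Longrightarrow> 0 < d \<Longrightarrow> d < k i \<Longrightarrow>
      \<exists>S. subgroup S G \<and> finite_index G S \<and> g i [^] d \<notin> S"
  proof -
    fix i d assume i: "i < r" and d: "0 < d" "d < k i"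
    have "\<not> k i dvd d" using d by (simp add: nat_dvd_not_less)
    then have "g i [^] d \<notin> N" using dvdN[OF i] by simp
    then show "\<exists>S. subgroup S G \<and> finite_index G S \<and> g i [^] d \<notin> S"
      unfolding N_def finite_residual_def by blast
  qed
  define I where "I = Sigma {..<r} (\<lambda>i. {0<..<k i})"
  define Sf :: "nat \<times> nat \<Rightarrow> 'a set" where "Sf p = (SOME S. subgroup S G \<and> finite_index G S \<and> g (fst p) [^] snd p \<notin> S)" for p
  have Sf: "\<And>p. p \<in> I \<Longrightarrow> subgroup (Sf p) G \<and> finite_index G (Sf p) \<and> g (fst p) [^] snd p \<notin> Sf p"
  proof -
    fix p assume "p \<in> I"
    then have "fst p < r" "0 < snd p" "snd p < k (fst p)" unfolding I_def by auto
    then have "\<exists>S. subgroup S G \<and> finite_index G S \<and> g (fst p) [^] snd p \<notin> S" by (rule exS)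
    then show "subgroup (Sf p) G \<and> finite_index G (Sf p) \<and> g (fst p) [^] snd p \<notin> Sf p"
      unfolding Sf_def by (rule someI_ex)
  qed
  define SS where "SS = Sf ` I"
  have SSsub: "\<And>S. S \<in> SS \<Longrightarrow> subgroup S G" using Sf unfolding SS_def by blast
  have finI: "finite I" unfolding I_def by simp
  define H0 where "H0 = core SS"
  have H0n: "H0 \<lhd> G" unfolding H0_def by (rule core_normal[OF SSsub])
  have H0fi: "finite_index G H0" unfolding H0_def finite_index_def
    by (rule core_finite_index[OF SSsub]) (use finI Sf in \<open>auto simp: SS_def finite_index_def\<close>)
  have NH0: "N \<subseteq> H0" unfolding N_def
    by (rule residual_sub[OF _ H0fi]) (use H0n normal_imp_subgroup in blast)
  have ord_eq: "\<forall>i<r. quot_ord G H0 (g i) = quot_ord G N (g i)"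
  proof (intro allI impI)
    fix i assume i: "i < r"
    interpret HH: normal H0 G by (rule H0n)
    have GH: "group (G Mod H0)" by (rule HH.factorgroup_is_group)
    have gcH: "H0 #> g i \<in> carrier (G Mod H0)"
      using g[OF i] by (simp add: FactGroup_def rcosetsI HH.subset)
    define oH where "oH = group.ord (G Mod H0) (H0 #> g i)"
    have oneH: "\<And>d. (H0 #> g i) [^]\<^bsub>G Mod H0\<^esub> (d::nat) = \<one>\<^bsub>G Mod H0\<^esub> \<longleftrightarrow> g i [^] d \<in> H0"
      using HH.FactGroup_pow g[OF i] coset_one_iff[OF HH.subgroup_axioms] by simp
    have dvdH: "\<And>d. g i [^] d \<in> H0 \<longleftrightarrow> oH dvd d"
      using group.pow_eq_id[OF GH gcH] oneH unfolding oH_def by simp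
    have "g i [^] k i \<in> N" using dvdN[OF i] by simp
    then have "oH dvd k i" using NH0 dvdH by blast
    then have opos: "oH > 0" "oH \<le> k i" using kpos[OF i] by (auto intro: dvd_imp_le gr0I)
    have "oH = k i"
    proof (rule ccontr)
      assume "oH \<noteq> k i"
      then have "(i, oH) \<in> I" using opos i unfolding I_def by auto
      then have "g i [^] oH \<notin> Sf (i, oH)" "subgroup (Sf (i, oH)) G" using Sf by auto
      moreover have "H0 \<subseteq> Sf (i, oH)" unfolding H0_def
        by (rule core_sub) (use \<open>(i, oH) \<in> I\<close> SS_def Sf in auto)
      moreover have "g i [^] oH \<in> H0" using dvdH by simp
      ultimately show False by blast
    qed
    then show "quot_ord G H0 (g i) = quot_ord G N (g i)"
      unfolding quot_ord_def oH_def k_def by simp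
  qed
  show ?thesis using H0n H0fi ord_eq unfolding N_def by blast
qed

end


theorem mainTheorem8:
  fixes n r :: nat and u :: "nat \<Rightarrow> fword" and m :: "nat \<Rightarrow> nat"
    and G :: "fword set monoid" and k :: "nat \<Rightarrow> nat"
  assumes n_pos: "n \<ge> 1"
    and m_pos: "\<forall>i<r. m i \<ge> 1"
    and u_words: "\<forall>i<r. u i \<in> words {..<n}"
    and u_not_power: "\<forall>i<r. \<not> proper_power (free_group n) (pres_class {..<n} {} (u i))"
    and G_def: "G = pres_group {..<n} (pow_relators r u m)"
    and k_def: "\<forall>i<r. k i = quot_ord G (finite_residual G) (pres_class {..<n} (pow_relators r u m) (u i))"
  shows "(\<exists>H. H \<lhd> G \<and> finite_index G H \<and>
            (\<forall>i<r. quot_ord G H (pres_class {..<n} (pow_relators r u m) (u i)) = k i))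
       \<and> (\<forall>H. H \<lhd> G \<and> finite_index G H \<and>
            (\<forall>i<r. quot_ord G H (pres_class {..<n} (pow_relators r u m) (u i)) = k i)
          \<longrightarrow> deficiency (G\<lparr>carrier := H\<rparr>)
              \<ge> ereal (1 + real (group_index G H) * ((real n - (\<Sum>i<r. 1 / real (k i))) - 1)))"
proof -
  have crw: "\<And>w k. w \<in> words {..<n} \<Longrightarrow> concat (replicate k w) \<in> words {..<n}"
  proof -
    fix w :: fword and k :: nat assume "w \<in> words {..<n}"
    then show "concat (replicate k w) \<in> words {..<n}" by (induction k) auto
  qed
  have Rw: "pow_relators r u m \<subseteq> words {..<n}"
    unfolding pow_relators_def using u_words crw by blast
  interpret PR: pres "{..<n}" "pow_relators r u m" by unfold_locales (rule Rw)
  have grp: "group G" using PR.group_P G_def by simp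
  define g where "g i = pres_class {..<n} (pow_relators r u m) (u i)" for i
  have gc: "\<And>i. i < r \<Longrightarrow> g i \<in> carrier G" unfolding g_def G_def using u_words by simp
  have gp: "\<And>i. i < r \<Longrightarrow> \<exists>m'>0. g i [^]\<^bsub>G\<^esub> (m'::nat) = \<one>\<^bsub>G\<^esub>"
  proof -
    fix i assume i: "i < r"
    have "concat (replicate (m i) (u i)) \<in> pow_relators r u m" unfolding pow_relators_def using i by blast
    then have "PR.rel (concat (replicate (m i) (u i))) []"
      using pres_rel.relator[of "[]" "{..<n}" "[]" _ "pow_relators r u m"] by simp
    then have "g i [^]\<^bsub>G\<^esub> m i = \<one>\<^bsub>G\<^esub>"
      unfolding g_def G_def using PR.pow_P u_words i PR.cls_eq_iff crw PR.one_P by simp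
    then show "\<exists>m'>0. g i [^]\<^bsub>G\<^esub> (m'::nat) = \<one>\<^bsub>G\<^esub>" using m_pos i by (metis less_le_trans zero_less_one)
  qed
  have part1: "\<exists>H. H \<lhd> G \<and> finite_index G H \<and>
            (\<forall>i<r. quot_ord G H (pres_class {..<n} (pow_relators r u m) (u i)) = k i)"
    using group.existence_gen[OF grp, of r g, OF gc gp] k_def unfolding g_def by simp
  have part2: "deficiency (G\<lparr>carrier := H\<rparr>)
              \<ge> ereal (1 + real (group_index G H) * ((real n - (\<Sum>i<r. 1 / real (k i))) - 1))"
    if H: "H \<lhd> G" "finite_index G H"
      "\<forall>i<r. quot_ord G H (pres_class {..<n} (pow_relators r u m) (u i)) = k i" for H
  proof -
    interpret X: RS n r u m H
    proof (rule RS.intro)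
      show "pres {..<n} (pow_relators r u m)" by (rule PR.pres_axioms)
      show "H \<lhd> pres_group {..<n} (pow_relators r u m)" using H G_def by simp
      show "RS_axioms n r u m H"
        by (rule RS_axioms.intro) (use n_pos H u_words m_pos G_def in \<open>auto simp: finite_index_def\<close>)
    qed
    have kk: "\<And>i. i < r \<Longrightarrow> X.kk i = k i"
      using H(3) unfolding X.kk_def X.gam_def X.rho_def quot_ord_def G_def by simp
    have j: "X.j = group_index G H" unfolding group_index_def G_def by simp
    have "(\<Sum>i<r. 1 / real (X.kk i)) = (\<Sum>i<r. 1 / real (k i))" using kk by simp
    then show ?thesis using X.main_bound j G_def by simp
  qed
  show ?thesis using part1 part2 by blast
qed


end
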